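(* Let $\varphi$ be a random homeomorphism and $N$ a random isolating block for $\varphi$ with $N(\omega)=\mathrm{cl}(\mathrm{int}N(\omega))$. Then for every sufficiently small random compact neighborhood $L$ of $N^-$ in $N$ with $L(\omega)=\mathrm{cl}(\mathrm{int}L(\omega))$, the pair $(N,L)$ is a random filtration pair for $\mathrm{Inv}N$. Moreover, there exists a random $C^0$-neighborhood of $\varphi$, i.e. a real random variable $\delta>0$, such that for every random homeomorphism $\psi$ with $d^N_{\varphi,\psi}(\omega)<\delta(\omega)$, the set $S_\psi(\omega):=\mathrm{Inv}(N(\omega)\setminus L(\omega),\psi)$ is a random isolated invariant set for $\psi$ and $(N,L)$ is a random filtration pair for $S_\psi$ (with respect to $\psi$).
   Context: Let $(\Omega,\mathscr F,\mathbb P)$ be a probability space and $\theta:\Omega\to\Omega$ an invertible bimeasurable map preserving $\mathbb P$; write $\theta_n=\theta^n$. Let $(X,d_X)$ be a locally compact separable complete metric space. A random homeomorphism is a map $\varphi:\Omega\times X\to X$ with $\varphi(\cdot,x)$ measurable for every $x$ and $\varphi(\omega,\cdot)$ a homeomorphism for every $\omega$; iterates: $\varphi^n(\omega,\cdot)=\varphi(\theta_{n-1}\omega,\cdot)\circ\cdots\circ\varphi(\omega,\cdot)$ ($n>0$), $\varphi^0=\mathrm{id}_X$, $\varphi^n(\omega,\cdot)=\varphi(\theta_n\omega,\cdot)^{-1}\circ\cdots\circ\varphi(\theta_{-1}\omega,\cdot)^{-1}$ ($n<0$); $\varphi^{-1}(\theta\omega,\cdot)=\varphi(\omega,\cdot)^{-1}$.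 A multifunction with compact values $D$ is a random compact set if $\omega\mapsto\mathrm{dist}_X(x,D(\omega))$ is measurable for each $x$. For a random set $A$ (w.r.t. $\varphi$), $\mathrm{Inv}(A,\varphi)(\omega)=\{x\in A(\omega):\varphi^n(\omega,x)\in A(\theta_n\omega)\ \forall n\in\mathbb Z\}$, also written $\mathrm{Inv}A$. A random compact set $N$ is a random isolating neighborhood if $\mathrm{Inv}N(\omega)\subset \mathrm{int}N(\omega)$; $S$ is a random isolated invariant set if $S=\mathrm{Inv}N$ for such $N$ (then $N$ is a random isolating neighborhood of $S$). $N$ is a random isolating block if $\varphi(\theta_{-1}\omega,N(\theta_{-1}\omega))\cap N(\omega)\cap\varphi^{-1}(\theta\omega,N(\theta\omega))\subset\mathrm{int}N(\omega)$. The exit set is $N^-(\omega)=\{x\in N(\omega):\varphi(\omega,x)\notin\mathrm{int}N(\theta\omega)\}$. A random neighborhood of a random set $A$ in $N$ is a random set $W\subset N$ with $A(\omega)$ in the interior of $W(\omega)$ relative to $N(\omega)$. A random filtration pair for a random isolated invariant set $S$ is a pair $(N,L)$ where $N$ is a random isolating neighborhood with $S=\mathrm{Inv}N$, $L\subset N$ is a random compact set, $N=\mathrm{cl}(\mathrm{int}N)$, $L=\mathrm{cl}(\mathrm{int}L)$, and: $\mathrm{cl}(N(\omega)\setminus L(\omega))$ is a random isolating neighborhood of $S$; $L$ is a random neighborhood of $N^-$ in $N$; and $\varphi(\omega,L(\omega))\cap\mathrm{cl}(N(\theta\omega)\setminus L(\theta\omega))=\emptyset$. For random homeomorphisms $\varphi,\psi$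 and a random compact set $N$, $d^N_{\varphi,\psi}(\omega)=\sup_{x\in N(\theta_{-1}\omega)}d_X(\varphi(\theta_{-1}\omega,x),\psi(\theta_{-1}\omega,x))+\sup_{y\in N(\theta\omega)}d_X(\varphi^{-1}(\theta\omega,y),\psi^{-1}(\theta\omega,y))$. *)

theory Defs
  imports "HOL-Probability.Probability"
begin

definition mds :: "'w measure \<Rightarrow> ('w \<Rightarrow> 'w) \<Rightarrow> bool" where
  "mds M \<theta> \<longleftrightarrow> prob_space M \<and> bij_betw \<theta> (space M) (space M)
     \<and> \<theta> \<in> measurable M M \<and> inv_into (space M) \<theta> \<in> measurable M M
     \<and> distr M M \<theta> = M"

definition theta_int :: "'w measure \<Rightarrow> ('w \<Rightarrow> 'w) \<Rightarrow> int \<Rightarrow> 'w \<Rightarrow> 'w" where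
  "theta_int M \<theta> n = (if 0 \<le> n then \<theta> ^^ nat n else inv_into (space M) \<theta> ^^ nat (- n))"

definition random_homeo :: "'w measure \<Rightarrow> ('w \<Rightarrow> 'x::topological_space \<Rightarrow> 'x) \<Rightarrow> bool" where
  "random_homeo M \<phi> \<longleftrightarrow> (\<forall>x. (\<lambda>\<omega>. \<phi> \<omega> x) \<in> borel_measurable M)
     \<and> (\<forall>\<omega>\<in>space M. \<exists>g. homeomorphism UNIV UNIV (\<phi> \<omega>) g)"

fun phi_pos :: "('w \<Rightarrow> 'w) \<Rightarrow> ('w \<Rightarrow> 'x \<Rightarrow> 'x) \<Rightarrow> nat \<Rightarrow> 'w \<Rightarrow> 'x \<Rightarrow> 'x" where
  "phi_pos \<theta> \<phi> 0 \<omega> = id"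
| "phi_pos \<theta> \<phi> (Suc n) \<omega> = \<phi> ((\<theta> ^^ n) \<omega>) \<circ> phi_pos \<theta> \<phi> n \<omega>"

fun phi_neg :: "'w measure \<Rightarrow> ('w \<Rightarrow> 'w) \<Rightarrow> ('w \<Rightarrow> 'x \<Rightarrow> 'x) \<Rightarrow> nat \<Rightarrow> 'w \<Rightarrow> 'x \<Rightarrow> 'x" where
  "phi_neg M \<theta> \<phi> 0 \<omega> = id"
| "phi_neg M \<theta> \<phi> (Suc n) \<omega> =
     inv (\<phi> (theta_int M \<theta> (- (int n + 1)) \<omega>)) \<circ> phi_neg M \<theta> \<phi> n \<omega>"

definition phi_int :: "'w measure \<Rightarrow> ('w \<Rightarrow> 'w) \<Rightarrow> ('w \<Rightarrow> 'x \<Rightarrow> 'x) \<Rightarrow> int \<Rightarrow> 'w \<Rightarrow> 'x \<Rightarrow> 'x" where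
  "phi_int M \<theta> \<phi> n = (if 0 \<le> n then phi_pos \<theta> \<phi> (nat n) else phi_neg M \<theta> \<phi> (nat (- n)))"

definition random_compact :: "'w measure \<Rightarrow> ('w \<Rightarrow> 'x::metric_space set) \<Rightarrow> bool" where
  "random_compact M D \<longleftrightarrow> (\<forall>\<omega>\<in>space M. compact (D \<omega>))
     \<and> (\<forall>x. (\<lambda>\<omega>. if D \<omega> = {} then (\<infinity>::ereal) else ereal (infdist x (D \<omega>))) \<in> borel_measurable M)"

definition Inv :: "'w measure \<Rightarrow> ('w \<Rightarrow> 'w) \<Rightarrow> ('w \<Rightarrow> 'x \<Rightarrow> 'x) \<Rightarrow> ('w \<Rightarrow> 'x set) \<Rightarrow> 'w \<Rightarrow> 'x set" where
  "Inv M \<theta> \<phi> A \<omega> = {x \<in> A \<omega>. \<forall>n::int. phi_int M \<theta> \<phi> n \<omega> x \<in> A (theta_int M \<theta> n \<omega>)}"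

definition random_isol_nbhd :: "'w measure \<Rightarrow> ('w \<Rightarrow> 'w) \<Rightarrow> ('w \<Rightarrow> 'x::metric_space \<Rightarrow> 'x) \<Rightarrow> ('w \<Rightarrow> 'x set) \<Rightarrow> bool" where
  "random_isol_nbhd M \<theta> \<phi> N \<longleftrightarrow> random_compact M N
     \<and> (\<forall>\<omega>\<in>space M. Inv M \<theta> \<phi> N \<omega> \<subseteq> interior (N \<omega>))"

definition random_isol_inv_set :: "'w measure \<Rightarrow> ('w \<Rightarrow> 'w) \<Rightarrow> ('w \<Rightarrow> 'x::metric_space \<Rightarrow> 'x) \<Rightarrow> ('w \<Rightarrow> 'x set) \<Rightarrow> bool" where
  "random_isol_inv_set M \<theta> \<phi> S \<longleftrightarrow>
     (\<exists>N. random_isol_nbhd M \<theta> \<phi> N \<and> (\<forall>\<omega>\<in>space M. S \<omega> = Inv M \<theta> \<phi> N \<omega>))"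

definition random_isol_block :: "'w measure \<Rightarrow> ('w \<Rightarrow> 'w) \<Rightarrow> ('w \<Rightarrow> 'x::metric_space \<Rightarrow> 'x) \<Rightarrow> ('w \<Rightarrow> 'x set) \<Rightarrow> bool" where
  "random_isol_block M \<theta> \<phi> N \<longleftrightarrow> random_compact M N
     \<and> (\<forall>\<omega>\<in>space M.
          \<phi> (theta_int M \<theta> (-1) \<omega>) ` N (theta_int M \<theta> (-1) \<omega>) \<inter> N \<omega>
            \<inter> phi_int M \<theta> \<phi> (-1) (\<theta> \<omega>) ` N (\<theta> \<omega>) \<subseteq> interior (N \<omega>))"

definition exit_set :: "('w \<Rightarrow> 'w) \<Rightarrow> ('w \<Rightarrow> 'x::topological_space \<Rightarrow> 'x) \<Rightarrow> ('w \<Rightarrow> 'x set) \<Rightarrow> 'w \<Rightarrow> 'x set" where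
  "exit_set \<theta> \<phi> N \<omega> = {x \<in> N \<omega>. \<phi> \<omega> x \<notin> interior (N (\<theta> \<omega>))}"

definition rel_nbhd :: "'w measure \<Rightarrow> ('w \<Rightarrow> 'x::topological_space set) \<Rightarrow> ('w \<Rightarrow> 'x set) \<Rightarrow> ('w \<Rightarrow> 'x set) \<Rightarrow> bool" where
  "rel_nbhd M W A N \<longleftrightarrow> (\<forall>\<omega>\<in>space M. W \<omega> \<subseteq> N \<omega>
      \<and> A \<omega> \<subseteq> (top_of_set (N \<omega>)) interior_of (W \<omega>))"

definition filtration_pair :: "'w measure \<Rightarrow> ('w \<Rightarrow> 'w) \<Rightarrow> ('w \<Rightarrow> 'x::metric_space \<Rightarrow> 'x)
    \<Rightarrow> ('w \<Rightarrow> 'x set) \<Rightarrow> ('w \<Rightarrow> 'x set) \<Rightarrow> ('w \<Rightarrow> 'x set) \<Rightarrow> bool" where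
  "filtration_pair M \<theta> \<phi> N L S \<longleftrightarrow>
     random_isol_nbhd M \<theta> \<phi> N \<and> (\<forall>\<omega>\<in>space M. S \<omega> = Inv M \<theta> \<phi> N \<omega>)
     \<and> random_compact M L \<and> (\<forall>\<omega>\<in>space M. L \<omega> \<subseteq> N \<omega>)
     \<and> (\<forall>\<omega>\<in>space M. N \<omega> = closure (interior (N \<omega>)) \<and> L \<omega> = closure (interior (L \<omega>)))
     \<and> random_isol_nbhd M \<theta> \<phi> (\<lambda>\<omega>. closure (N \<omega> - L \<omega>))
     \<and> (\<forall>\<omega>\<in>space M. S \<omega> = Inv M \<theta> \<phi> (\<lambda>\<omega>. closure (N \<omega> - L \<omega>)) \<omega>)
     \<and> rel_nbhd M L (exit_set \<theta> \<phi> N) N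
     \<and> (\<forall>\<omega>\<in>space M. \<phi> \<omega> ` L \<omega> \<inter> closure (N (\<theta> \<omega>) - L (\<theta> \<omega>)) = {})"

text \<open>The distance d^N_{phi,psi}; suprema over empty sets are taken to be 0 (distances are nonnegative).\<close>
definition dN :: "'w measure \<Rightarrow> ('w \<Rightarrow> 'w) \<Rightarrow> ('w \<Rightarrow> 'x set) \<Rightarrow> ('w \<Rightarrow> 'x::metric_space \<Rightarrow> 'x)
    \<Rightarrow> ('w \<Rightarrow> 'x \<Rightarrow> 'x) \<Rightarrow> 'w \<Rightarrow> real" where
  "dN M \<theta> N \<phi> \<psi> \<omega> =
     Sup (insert 0 ((\<lambda>x. dist (\<phi> (theta_int M \<theta> (-1) \<omega>) x) (\<psi> (theta_int M \<theta> (-1) \<omega>) x))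
                     ` N (theta_int M \<theta> (-1) \<omega>)))
   + Sup (insert 0 ((\<lambda>y. dist (phi_int M \<theta> \<phi> (-1) (\<theta> \<omega>) y) (phi_int M \<theta> \<psi> (-1) (\<theta> \<omega>) y))
                     ` N (\<theta> \<omega>)))"

end

theory Submission
  imports Defs
begin

lemma mds_facts:
  assumes "mds M \<theta>"
  shows "prob_space M" "\<theta> \<in> M \<rightarrow>\<^sub>M M" "inv_into (space M) \<theta> \<in> M \<rightarrow>\<^sub>M M"
    "\<And>\<omega>. \<omega> \<in> space M \<Longrightarrow> \<theta> \<omega> \<in> space M"
    "\<And>\<omega>. \<omega> \<in> space M \<Longrightarrow> inv_into (space M) \<theta> \<omega> \<in> space M"
    "\<And>\<omega>. \<omega> \<in> space M \<Longrightarrow> inv_into (space M) \<theta> (\<theta> \<omega>) = \<omega>"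
    "\<And>\<omega>. \<omega> \<in> space M \<Longrightarrow> \<theta> (inv_into (space M) \<theta> \<omega>) = \<omega>"
proof -
  have b: "bij_betw \<theta> (space M) (space M)" and m: "\<theta> \<in> M \<rightarrow>\<^sub>M M" "inv_into (space M) \<theta> \<in> M \<rightarrow>\<^sub>M M"
    and p: "prob_space M"
    using assms unfolding mds_def by blast+
  show "prob_space M" "\<theta> \<in> M \<rightarrow>\<^sub>M M" "inv_into (space M) \<theta> \<in> M \<rightarrow>\<^sub>M M" using m p by blast+
  show "\<And>\<omega>. \<omega> \<in> space M \<Longrightarrow> \<theta> \<omega> \<in> space M" using b by (meson bij_betwE)
  show "\<And>\<omega>. \<omega> \<in> space M \<Longrightarrow> inv_into (space M) \<theta> \<omega> \<in> space M"
    using b by (metis bij_betw_def inv_into_into)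
  show "\<And>\<omega>. \<omega> \<in> space M \<Longrightarrow> inv_into (space M) \<theta> (\<theta> \<omega>) = \<omega>"
    using b by (simp add: bij_betw_inv_into_left)
  show "\<And>\<omega>. \<omega> \<in> space M \<Longrightarrow> \<theta> (inv_into (space M) \<theta> \<omega>) = \<omega>"
    using b by (meson bij_betw_inv_into_right)
qed

lemma funpow_space: "(\<And>\<omega>. \<omega> \<in> S \<Longrightarrow> f \<omega> \<in> S) \<Longrightarrow> \<omega> \<in> S \<Longrightarrow> (f ^^ k) \<omega> \<in> S"
  by (induction k) auto

lemma theta_int_space:
  assumes "mds M \<theta>" "\<omega> \<in> space M" shows "theta_int M \<theta> n \<omega> \<in> space M"
  using assms mds_facts[OF assms(1)] unfolding theta_int_def
  by (auto intro!: funpow_space)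

lemma theta_int_0[simp]: "theta_int M \<theta> 0 \<omega> = \<omega>"
  by (simp add: theta_int_def)

lemma theta_int_1[simp]: "theta_int M \<theta> 1 \<omega> = \<theta> \<omega>"
  by (simp add: theta_int_def)

lemma theta_int_m1[simp]: "theta_int M \<theta> (-1) \<omega> = inv_into (space M) \<theta> \<omega>"
  by (simp add: theta_int_def)

lemma theta_int_succ:
  assumes "mds M \<theta>" "\<omega> \<in> space M"
  shows "theta_int M \<theta> (n + 1) \<omega> = \<theta> (theta_int M \<theta> n \<omega>)"
proof (cases "0 \<le> n")
  case True
  then have "nat (n+1) = Suc (nat n)" by simp
  then show ?thesis using True by (simp add: theta_int_def)
next
  case False
  define k where "k = nat (-n) - 1"
  have k1: "nat (-n) = Suc k" using False k_def by simp
  have sp: "(inv_into (space M) \<theta> ^^ k) \<omega> \<in> space M"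
    using mds_facts[OF assms(1)] assms(2) by (auto intro!: funpow_space)
  have a: "theta_int M \<theta> n \<omega> = inv_into (space M) \<theta> ((inv_into (space M) \<theta> ^^ k) \<omega>)"
    using False k1 by (simp add: theta_int_def)
  have b: "theta_int M \<theta> (n + 1) \<omega> = (inv_into (space M) \<theta> ^^ k) \<omega>"
  proof (cases "n + 1 = 0")
    case True then have "k = 0" using k1 by simp
    then show ?thesis using True by (simp add: theta_int_def)
  next
    case F2: False
    then have "\<not> 0 \<le> n + 1" "nat (-(n+1)) = k" using False k1 by auto
    then show ?thesis by (simp add: theta_int_def)
  qed
  show ?thesis using a b mds_facts(7)[OF assms(1) sp] by simp
qed

lemma theta_int_2:
  assumes "mds M \<theta>" "\<omega> \<in> space M" shows "theta_int M \<theta> 2 \<omega> = \<theta> (\<theta> \<omega>)"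
  using theta_int_succ[OF assms, of 1] by simp

definition homeos :: "'w measure \<Rightarrow> ('w \<Rightarrow> 'x::topological_space \<Rightarrow> 'x) \<Rightarrow> bool" where
  "homeos M h \<longleftrightarrow> (\<forall>\<omega>\<in>space M. \<exists>g. homeomorphism UNIV UNIV (h \<omega>) g)"

lemma homeos_fg: "homeos M h \<Longrightarrow> \<omega> \<in> space M \<Longrightarrow>
   \<exists>g. (\<forall>x. g (h \<omega> x) = x) \<and> (\<forall>y. h \<omega> (g y) = y) \<and> continuous_on UNIV (h \<omega>) \<and> continuous_on UNIV g"
proof -
  assume "homeos M h" "\<omega> \<in> space M"
  then obtain g where g: "homeomorphism UNIV UNIV (h \<omega>) g" unfolding homeos_def by blast
  show ?thesis
    using homeomorphism_apply1[OF g] homeomorphism_apply2[OF g] homeomorphism_cont1[OF g] homeomorphism_cont2[OF g]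
    by blast
qed

lemma homeos_surj: "homeos M h \<Longrightarrow> \<omega> \<in> space M \<Longrightarrow> h \<omega> (inv (h \<omega>) y) = y"
proof -
  assume a: "homeos M h" "\<omega> \<in> space M"
  obtain g where g: "\<forall>y. h \<omega> (g y) = y" using homeos_fg[OF a] by blast
  have "surj (h \<omega>)" by (rule surjI[of _ g]) (use g in auto)
  then show ?thesis by (rule surj_f_inv_f)
qed

lemma homeos_inj: "homeos M h \<Longrightarrow> \<omega> \<in> space M \<Longrightarrow> inv (h \<omega>) (h \<omega> y) = y"
proof -
  assume a: "homeos M h" "\<omega> \<in> space M"
  obtain g where g: "\<forall>x. g (h \<omega> x) = x" using homeos_fg[OF a] by blast
  have "inj (h \<omega>)" by (rule inj_on_inverseI[of _ g]) (use g in auto)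
  then show ?thesis by (rule inv_f_f)
qed

lemma homeos_cont: "homeos M h \<Longrightarrow> \<omega> \<in> space M \<Longrightarrow> continuous_on S (h \<omega>)"
proof -
  assume a: "homeos M h" "\<omega> \<in> space M"
  then have "continuous_on UNIV (h \<omega>)" using homeos_fg[OF a] by blast
  then show ?thesis by (rule continuous_on_subset) simp
qed

lemma homeos_inv_cont: "homeos M h \<Longrightarrow> \<omega> \<in> space M \<Longrightarrow> continuous_on S (inv (h \<omega>))"
proof -
  assume a: "homeos M h" "\<omega> \<in> space M"
  obtain g where g: "\<forall>x. g (h \<omega> x) = x" "\<forall>y. h \<omega> (g y) = y" "continuous_on UNIV g"
    using homeos_fg[OF a] by blast
  have "inj (h \<omega>)" by (rule inj_on_inverseI[of _ g]) (use g in auto)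
  then have "inv (h \<omega>) = g" using g by (intro ext) (metis inv_f_f)
  then show ?thesis using g(3) by (metis continuous_on_subset subset_UNIV)
qed

lemma phi_int_0[simp]: "phi_int M \<theta> h 0 \<omega> = id"
  by (simp add: phi_int_def)

lemma phi_int_succ:
  assumes "mds M \<theta>" "\<omega> \<in> space M" "homeos M h"
  shows "phi_int M \<theta> h (n + 1) \<omega> x = h (theta_int M \<theta> n \<omega>) (phi_int M \<theta> h n \<omega> x)"
proof (cases "0 \<le> n")
  case True
  then have "nat (n+1) = Suc (nat n)" by simp
  then show ?thesis using True by (simp add: phi_int_def theta_int_def)
next
  case False
  define k where "k = nat (-n) - 1"
  have k1: "nat (-n) = Suc k" using False k_def by simp
  have kk: "n = - (int k + 1)" using k1 False by simp
  have sp: "theta_int M \<theta> n \<omega> \<in> space M" using theta_int_space[OF assms(1,2)] .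
  have a: "phi_int M \<theta> h n \<omega> = inv (h (theta_int M \<theta> n \<omega>)) \<circ> phi_neg M \<theta> h k \<omega>"
  proof -
    have e: "- int k - 1 = n" using kk by simp
    show ?thesis using False k1 by (simp add: phi_int_def e)
  qed
  have b: "phi_int M \<theta> h (n + 1) \<omega> = phi_neg M \<theta> h k \<omega>"
  proof (cases "n + 1 = 0")
    case True then have "k = 0" using k1 by simp
    then show ?thesis using True by (simp add: phi_int_def)
  next
    case F2: False
    then have "\<not> 0 \<le> n + 1" "nat (-(n+1)) = k" using False k1 by auto
    then show ?thesis by (simp add: phi_int_def)
  qed
  show ?thesis using a b homeos_surj[OF assms(3) sp] by simp
qed

lemma phi_int_1:
  assumes "mds M \<theta>" "\<omega> \<in> space M" "homeos M h"
  shows "phi_int M \<theta> h 1 \<omega> x = h \<omega> x"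
  using phi_int_succ[OF assms, of 0] by simp

lemma phi_int_m1_theta:
  assumes "mds M \<theta>" "\<omega> \<in> space M"
  shows "phi_int M \<theta> h (-1) (\<theta> \<omega>) = inv (h \<omega>)"
  using mds_facts(6)[OF assms] by (simp add: phi_int_def theta_int_def)


lemma Inv_mono:
  assumes "mds M \<theta>" "\<omega> \<in> space M" "\<forall>\<omega>\<in>space M. A \<omega> \<subseteq> B \<omega>"
  shows "Inv M \<theta> h A \<omega> \<subseteq> Inv M \<theta> h B \<omega>"
proof
  fix x assume x: "x \<in> Inv M \<theta> h A \<omega>"
  have "\<forall>n. phi_int M \<theta> h n \<omega> x \<in> B (theta_int M \<theta> n \<omega>)"
  proof
    fix n
    have "phi_int M \<theta> h n \<omega> x \<in> A (theta_int M \<theta> n \<omega>)" using x unfolding Inv_def by blast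
    then show "phi_int M \<theta> h n \<omega> x \<in> B (theta_int M \<theta> n \<omega>)"
      using assms(3) theta_int_space[OF assms(1,2), of n] by blast
  qed
  moreover have "x \<in> B \<omega>" using x assms(2,3) unfolding Inv_def by blast
  ultimately show "x \<in> Inv M \<theta> h B \<omega>" unfolding Inv_def by blast
qed

lemma InvD: "x \<in> Inv M \<theta> h A \<omega> \<Longrightarrow> phi_int M \<theta> h n \<omega> x \<in> A (theta_int M \<theta> n \<omega>)"
  unfolding Inv_def by blast

lemma InvD0: "x \<in> Inv M \<theta> h A \<omega> \<Longrightarrow> x \<in> A \<omega>"
  unfolding Inv_def by blast

lemma relint_not_cl:
  assumes "z \<in> (top_of_set N) interior_of L"
  shows "z \<notin> closure (N - L)"
proof
  assume zc: "z \<in> closure (N - L)"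
  have "\<exists>T. openin (top_of_set N) T \<and> z \<in> T \<and> T \<subseteq> L"
    using assms unfolding interior_of_def by (rule CollectD)
  then obtain T where T: "openin (top_of_set N) T" "z \<in> T" "T \<subseteq> L" by blast
  have "\<exists>U. open U \<and> T = N \<inter> U" using T(1) by (simp only: openin_open)
  then obtain U where U: "open U" "T = N \<inter> U" by blast
  have "U \<inter> (N - L) = {}" using U(2) T(3) by blast
  then have "U \<inter> closure (N - L) = {}" using open_Int_closure_eq_empty[OF U(1)] by blast
  then show False using zc U T(2) by blast
qed

lemma relint_intro:
  assumes "L \<subseteq> N" "z \<in> N" "z \<notin> closure (N - L)"
  shows "z \<in> (top_of_set N) interior_of L"
proof -
  have o: "openin (top_of_set N) (N \<inter> - closure (N - L))"
    by (rule openin_open_Int) (simp add: open_Compl)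
  have s: "N \<inter> - closure (N - L) \<subseteq> L" using closure_subset[of "N - L"] by blast
  have "z \<in> N \<inter> - closure (N - L)" using assms(2,3) by simp
  then show ?thesis using interior_of_maximal[OF s o] by (rule subsetD[rotated])
qed

lemma GFL:
  fixes h :: "'w \<Rightarrow> 'x::metric_space \<Rightarrow> 'x"
  assumes mds: "mds M \<theta>" and hh: "homeos M h"
    and rcN: "random_compact M N" and rcL: "random_compact M L"
    and rcK: "random_compact M (\<lambda>\<omega>. closure (N \<omega> - L \<omega>))"
    and reg: "\<forall>\<omega>\<in>space M. N \<omega> = closure (interior (N \<omega>)) \<and> L \<omega> = closure (interior (L \<omega>))"
    and sub: "\<forall>\<omega>\<in>space M. L \<omega> \<subseteq> N \<omega>"
    and BLK: "\<forall>\<omega>\<in>space M. \<forall>w\<in>N \<omega>. h \<omega> w \<in> N (\<theta> \<omega>) \<and> h (\<theta> \<omega>) (h \<omega> w) \<in> N (\<theta> (\<theta> \<omega>))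
                  \<longrightarrow> h \<omega> w \<in> interior (N (\<theta> \<omega>))"
    and AVOID: "\<forall>\<omega>\<in>space M. \<forall>x\<in>L \<omega>. \<not> (h \<omega> x \<in> N (\<theta> \<omega>) \<and> h (\<theta> \<omega>) (h \<omega> x) \<in> N (\<theta> (\<theta> \<omega>)))"
    and EXITIN: "\<forall>\<omega>\<in>space M. \<forall>x\<in>closure (N \<omega> - L \<omega>). h \<omega> x \<in> interior (N (\<theta> \<omega>))"
    and SEP: "\<forall>\<omega>\<in>space M. h \<omega> ` L \<omega> \<inter> closure (N (\<theta> \<omega>) - L (\<theta> \<omega>)) = {}"
  shows "filtration_pair M \<theta> h N L (Inv M \<theta> h N)"
    and "\<forall>\<omega>\<in>space M. Inv M \<theta> h (\<lambda>\<omega>. N \<omega> - L \<omega>) \<omega> = Inv M \<theta> h N \<omega>"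
proof -
  note step = phi_int_succ[OF mds _ hh]
  note tsucc = theta_int_succ[OF mds]
  note tsp = theta_int_space[OF mds]
  have closedN: "\<And>\<omega>. \<omega> \<in> space M \<Longrightarrow> closed (N \<omega>)"
    using rcN unfolding random_compact_def by (simp add: compact_imp_closed)
  have closedL: "\<And>\<omega>. \<omega> \<in> space M \<Longrightarrow> closed (L \<omega>)"
    using rcL unfolding random_compact_def by (simp add: compact_imp_closed)
  have inv_nL: "phi_int M \<theta> h n \<omega> x \<notin> L (theta_int M \<theta> n \<omega>)"
    if w: "\<omega> \<in> space M" and x: "x \<in> Inv M \<theta> h N \<omega>" for \<omega> x n
  proof -
    define \<omega>' where "\<omega>' = theta_int M \<theta> n \<omega>"
    define y where "y = phi_int M \<theta> h n \<omega> x"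
    have w': "\<omega>' \<in> space M" unfolding \<omega>'_def by (rule tsp[OF w])
    have a: "phi_int M \<theta> h (n+1) \<omega> x = h \<omega>' y" using step[OF w] \<omega>'_def y_def by simp
    have b: "theta_int M \<theta> (n+1) \<omega> = \<theta> \<omega>'" using tsucc[OF w] \<omega>'_def by simp
    have c: "phi_int M \<theta> h (n+1+1) \<omega> x = h (\<theta> \<omega>') (h \<omega>' y)" using step[OF w, of "n+1"] a b by simp
    have d: "theta_int M \<theta> (n+1+1) \<omega> = \<theta> (\<theta> \<omega>')" using tsucc[OF w, of "n+1"] b by simp
    have "h \<omega>' y \<in> N (\<theta> \<omega>')" using InvD[OF x, of "n+1"] a b by simp
    moreover have "h (\<theta> \<omega>') (h \<omega>' y) \<in> N (\<theta> (\<theta> \<omega>'))"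
      using InvD[OF x, of "n+1+1"] c d by simp
    ultimately show ?thesis using bspec[OF bspec[OF AVOID w'], of y] \<omega>'_def y_def by blast
  qed
  have inv_int: "x \<in> interior (N \<omega>)" if w: "\<omega> \<in> space M" and x: "x \<in> Inv M \<theta> h N \<omega>" for \<omega> x
  proof -
    define \<omega>' where "\<omega>' = theta_int M \<theta> (-1) \<omega>"
    define y where "y = phi_int M \<theta> h (-1) \<omega> x"
    have w': "\<omega>' \<in> space M" unfolding \<omega>'_def by (rule tsp[OF w])
    have yN: "y \<in> N \<omega>'" using InvD[OF x, of "-1"] unfolding y_def \<omega>'_def .
    have a: "h \<omega>' y = x" using step[OF w, of "-1" x] \<omega>'_def y_def by simp
    have b: "\<theta> \<omega>' = \<omega>" using tsucc[OF w, of "-1"] \<omega>'_def by simp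
    have c: "h \<omega> x = phi_int M \<theta> h 1 \<omega> x" using phi_int_1[OF mds w hh] by simp
    have "h \<omega> x \<in> N (\<theta> \<omega>)" using InvD[OF x, of 1] c by simp
    moreover have "x \<in> N \<omega>" using InvD0[OF x] .
    ultimately have "h \<omega>' y \<in> interior (N (\<theta> \<omega>'))" using bspec[OF bspec[OF BLK w'] yN] a b by simp
    then show ?thesis using a b by simp
  qed
  have inv_sub: "Inv M \<theta> h N \<omega> \<subseteq> Inv M \<theta> h (\<lambda>\<omega>. N \<omega> - L \<omega>) \<omega>" if w: "\<omega> \<in> space M" for \<omega>
  proof
    fix x assume x: "x \<in> Inv M \<theta> h N \<omega>"
    have "\<forall>n. phi_int M \<theta> h n \<omega> x \<notin> L (theta_int M \<theta> n \<omega>)" using inv_nL[OF w x] by blast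
    then have "\<forall>n. phi_int M \<theta> h n \<omega> x \<in> N (theta_int M \<theta> n \<omega>) - L (theta_int M \<theta> n \<omega>)"
      using x unfolding Inv_def by blast
    moreover have "x \<in> N \<omega> - L \<omega>" using calculation[rule_format, of 0] by simp
    ultimately show "x \<in> Inv M \<theta> h (\<lambda>\<omega>. N \<omega> - L \<omega>) \<omega>" unfolding Inv_def by blast
  qed
  have eq1: "Inv M \<theta> h (\<lambda>\<omega>. N \<omega> - L \<omega>) \<omega> = Inv M \<theta> h N \<omega>" if w: "\<omega> \<in> space M" for \<omega>
    using inv_sub[OF w] Inv_mono[OF mds w, of "\<lambda>\<omega>. N \<omega> - L \<omega>" N h] by blast
  have eq2: "Inv M \<theta> h (\<lambda>\<omega>. closure (N \<omega> - L \<omega>)) \<omega> = Inv M \<theta> h N \<omega>" if w: "\<omega> \<in> space M" for \<omega>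
  proof -
    have a: "\<forall>\<omega>\<in>space M. N \<omega> - L \<omega> \<subseteq> closure (N \<omega> - L \<omega>)" by (simp add: closure_subset)
    have b: "\<forall>\<omega>\<in>space M. closure (N \<omega> - L \<omega>) \<subseteq> N \<omega>"
      using closedN by (simp add: closure_minimal)
    have c: "Inv M \<theta> h (\<lambda>\<omega>. N \<omega> - L \<omega>) \<omega> \<subseteq> Inv M \<theta> h (\<lambda>\<omega>. closure (N \<omega> - L \<omega>)) \<omega>"
      using Inv_mono[OF mds w a] .
    have d: "Inv M \<theta> h (\<lambda>\<omega>. closure (N \<omega> - L \<omega>)) \<omega> \<subseteq> Inv M \<theta> h N \<omega>"
      using Inv_mono[OF mds w b] .
    show ?thesis using inv_sub[OF w] c d by (meson d subset_antisym subset_trans)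
  qed
  show "\<forall>\<omega>\<in>space M. Inv M \<theta> h (\<lambda>\<omega>. N \<omega> - L \<omega>) \<omega> = Inv M \<theta> h N \<omega>" using eq1 by blast
  have isoN: "random_isol_nbhd M \<theta> h N"
    unfolding random_isol_nbhd_def using rcN inv_int by blast
  have isoK: "random_isol_nbhd M \<theta> h (\<lambda>\<omega>. closure (N \<omega> - L \<omega>))"
    unfolding random_isol_nbhd_def
  proof (intro conjI rcK ballI subsetI)
    fix \<omega> x assume w: "\<omega> \<in> space M" and x: "x \<in> Inv M \<theta> h (\<lambda>\<omega>. closure (N \<omega> - L \<omega>)) \<omega>"
    then have x': "x \<in> Inv M \<theta> h N \<omega>" using eq2[OF w] by simp
    have "x \<in> interior (N \<omega>)" using inv_int[OF w x'] .
    moreover have "x \<notin> L \<omega>" using inv_nL[OF w x', of 0] by simp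
    ultimately have xin: "x \<in> interior (N \<omega>) - L \<omega>" by (rule DiffI)
    have op: "open (interior (N \<omega>) - L \<omega>)"
      using closedL[OF w] by (simp add: open_Diff)
    have sb: "interior (N \<omega>) - L \<omega> \<subseteq> closure (N \<omega> - L \<omega>)"
      using interior_subset[of "N \<omega>"] closure_subset[of "N \<omega> - L \<omega>"] by blast
    show "x \<in> interior (closure (N \<omega> - L \<omega>))"
      using interior_maximal[OF sb op] xin by (rule subsetD)
  qed
  have rel: "rel_nbhd M L (exit_set \<theta> h N) N"
    unfolding rel_nbhd_def
  proof (intro ballI conjI subsetI)
    fix \<omega> assume w: "\<omega> \<in> space M"
    show "\<And>x. x \<in> L \<omega> \<Longrightarrow> x \<in> N \<omega>" using sub w by blast
    fix x assume x: "x \<in> exit_set \<theta> h N \<omega>"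
    then have "x \<in> N \<omega>" "h \<omega> x \<notin> interior (N (\<theta> \<omega>))" unfolding exit_set_def by auto
    then have "x \<notin> closure (N \<omega> - L \<omega>)" using EXITIN w by blast
    then show "x \<in> (top_of_set (N \<omega>)) interior_of (L \<omega>)"
      using relint_intro sub w \<open>x \<in> N \<omega>\<close> by blast
  qed
  show "filtration_pair M \<theta> h N L (Inv M \<theta> h N)"
    unfolding filtration_pair_def
  proof (intro conjI isoN isoK rcL rel SEP ballI)
    show "\<And>\<omega>. Inv M \<theta> h N \<omega> = Inv M \<theta> h N \<omega>" by (rule refl)
    show "\<And>\<omega>. \<omega> \<in> space M \<Longrightarrow> L \<omega> \<subseteq> N \<omega>" using sub by blast
    show "\<And>\<omega>. \<omega> \<in> space M \<Longrightarrow> N \<omega> = closure (interior (N \<omega>))" using reg by blast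
    show "\<And>\<omega>. \<omega> \<in> space M \<Longrightarrow> L \<omega> = closure (interior (L \<omega>))" using reg by blast
    show "\<And>\<omega>. \<omega> \<in> space M \<Longrightarrow> Inv M \<theta> h N \<omega> = Inv M \<theta> h (\<lambda>\<omega>. closure (N \<omega> - L \<omega>)) \<omega>"
      using eq2 by simp
  qed
qed


definition dseq :: "nat \<Rightarrow> 'x::{metric_space, second_countable_topology}" where
  "dseq = from_nat_into (SOME D::'x set. countable D \<and> (\<forall>X. open X \<longrightarrow> X \<noteq> {} \<longrightarrow> (\<exists>d\<in>D. d \<in> X)))"

lemma dseq_dense:
  fixes U :: "'x::{metric_space, second_countable_topology} set"
  assumes "open U" "U \<noteq> {}"
  shows "\<exists>i. dseq i \<in> U"
proof -
  obtain D0 :: "'x set" where "countable D0" and D0: "\<And>X. open X \<Longrightarrow> X \<noteq> {} \<Longrightarrow> \<exists>d\<in>D0. d \<in> X"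
    by (erule countable_dense_setE)
  then have ex: "\<exists>D::'x set. countable D \<and> (\<forall>X. open X \<longrightarrow> X \<noteq> {} \<longrightarrow> (\<exists>d\<in>D. d \<in> X))" by blast
  define D where "D = (SOME D::'x set. countable D \<and> (\<forall>X. open X \<longrightarrow> X \<noteq> {} \<longrightarrow> (\<exists>d\<in>D. d \<in> X)))"
  have D: "countable D" "\<forall>X. open X \<longrightarrow> X \<noteq> {} \<longrightarrow> (\<exists>d\<in>D. d \<in> X)"
    using someI_ex[OF ex] unfolding D_def by blast+
  have "D \<noteq> {}" using D(2) by (metis UNIV_not_empty empty_iff open_UNIV)
  then have r: "range (from_nat_into D) = D" using D(1) by (simp add: range_from_nat_into)
  obtain d where "d \<in> D" "d \<in> U" using D(2) assms by blast
  then obtain i where "from_nat_into D i = d" using r by (metis rangeE)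
  then show ?thesis unfolding dseq_def D_def[symmetric] using \<open>d \<in> U\<close> by blast
qed

lemma dense_sub:
  fixes U :: "'x::{metric_space, second_countable_topology} set"
  assumes "open U"
  shows "U \<subseteq> closure (dseq ` {i. dseq i \<in> U})"
proof
  fix x assume x: "x \<in> U"
  show "x \<in> closure (dseq ` {i. dseq i \<in> U})"
    unfolding closure_approachable
  proof (intro allI impI)
    fix e :: real assume e: "0 < e"
    have o: "open (ball x e \<inter> U)" using assms by (intro open_Int) auto
    have ne: "ball x e \<inter> U \<noteq> {}" using x e by (metis IntI centre_in_ball empty_iff)
    obtain i where i: "dseq i \<in> ball x e \<inter> U" using dseq_dense[OF o ne] by blast
    then have "dseq i \<in> dseq ` {i. dseq i \<in> U}" by blast
    moreover have "dist (dseq i) x < e" using i by (simp add: dist_commute)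
    ultimately show "\<exists>y\<in>dseq ` {i. dseq i \<in> U}. dist y x < e" by blast
  qed
qed

lemma infdist_closure: "infdist x (closure T) = infdist x T"
  by (simp add: infdist_eq_setdist)

lemma regular_rep:
  fixes A :: "'x::{metric_space, second_countable_topology} set"
  assumes "closed A" "A = closure (interior A)"
  shows "A = closure (dseq ` {i. dseq i \<in> interior A})"
proof
  have "interior A \<subseteq> closure (dseq ` {i. dseq i \<in> interior A})" by (rule dense_sub) simp
  then have "closure (interior A) \<subseteq> closure (dseq ` {i. dseq i \<in> interior A})"
    by (simp add: closure_minimal)
  then show "A \<subseteq> closure (dseq ` {i. dseq i \<in> interior A})" using assms(2) by simp
  have "dseq ` {i. dseq i \<in> interior A} \<subseteq> A" using interior_subset[of A] by blast
  then show "closure (dseq ` {i. dseq i \<in> interior A}) \<subseteq> A" using assms(1) by (simp add: closure_minimal)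
qed

lemma compl_rep:
  fixes A :: "'x::{metric_space, second_countable_topology} set"
  assumes "closed A"
  shows "closure (dseq ` {i. dseq i \<in> - A}) = - interior A"
proof
  have "- A \<subseteq> closure (dseq ` {i. dseq i \<in> - A})" by (rule dense_sub) (use assms in auto)
  then have "closure (- A) \<subseteq> closure (dseq ` {i. dseq i \<in> - A})"
    by (simp add: closure_minimal)
  then show "- interior A \<subseteq> closure (dseq ` {i. dseq i \<in> - A})" by (simp add: closure_complement)
  have "dseq ` {i. dseq i \<in> - A} \<subseteq> - interior A" using interior_subset[of A] by blast
  moreover have "closed (- interior A)" by (rule closed_Compl) (rule open_interior)
  ultimately show "closure (dseq ` {i. dseq i \<in> - A}) \<subseteq> - interior A" by (simp add: closure_minimal)
qed

lemma diff_rep: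
  fixes N L :: "'x::{metric_space, second_countable_topology} set"
  assumes "closed L" "N = closure (interior N)"
  shows "closure (N - L) = closure (dseq ` {i. dseq i \<in> interior N \<inter> - L})"
proof
  have o: "open (interior N \<inter> - L)" using assms(1) by auto
  have "N - L \<subseteq> closure (interior N \<inter> - L)"
  proof
    fix z assume z: "z \<in> N - L"
    then have "z \<in> - L \<inter> closure (interior N)" using assms(2) by blast
    then have "z \<in> closure (- L \<inter> interior N)"
      using open_Int_closure_subset[of "- L" "interior N"] assms(1) by blast
    then show "z \<in> closure (interior N \<inter> - L)" by (simp add: Int_commute)
  qed
  also have "\<dots> \<subseteq> closure (dseq ` {i. dseq i \<in> interior N \<inter> - L})"
    using dense_sub[OF o] by (simp add: closure_minimal)
  finally show "closure (N - L) \<subseteq> closure (dseq ` {i. dseq i \<in> interior N \<inter> - L})"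
    by (simp add: closure_minimal)
  have "dseq ` {i. dseq i \<in> interior N \<inter> - L} \<subseteq> N - L" using interior_subset[of N] by blast
  then show "closure (dseq ` {i. dseq i \<in> interior N \<inter> - L}) \<subseteq> closure (N - L)"
    by (rule closure_mono)
qed

lemma pred_congI:
  assumes "Measurable.pred M P" "\<And>\<omega>. \<omega> \<in> space M \<Longrightarrow> P \<omega> = Q \<omega>"
  shows "Measurable.pred M Q"
proof -
  have "{\<omega> \<in> space M. Q \<omega>} = {\<omega> \<in> space M. P \<omega>}" using assms(2) by blast
  then show ?thesis using assms(1) unfolding pred_def by simp
qed

lemma pred_mem:
  fixes A :: "'w \<Rightarrow> 'x::metric_space set"
  assumes "random_compact M A"
  shows "Measurable.pred M (\<lambda>\<omega>. x \<in> A \<omega>)"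
proof -
  define F where "F = (\<lambda>\<omega>. if A \<omega> = {} then (\<infinity>::ereal) else ereal (infdist x (A \<omega>)))"
  have [measurable]: "F \<in> borel_measurable M" using assms unfolding random_compact_def F_def by blast
  have p: "Measurable.pred M (\<lambda>\<omega>. F \<omega> = 0)" by measurable
  show ?thesis
  proof (rule pred_congI[OF p])
    fix \<omega> assume w: "\<omega> \<in> space M"
    have c: "closed (A \<omega>)" using assms w unfolding random_compact_def by (simp add: compact_imp_closed)
    show "(F \<omega> = 0) = (x \<in> A \<omega>)"
    proof (cases "A \<omega> = {}")
      case True then show ?thesis by (simp add: F_def)
    next
      case False then show ?thesis using in_closed_iff_infdist_zero[OF c False] by (simp add: F_def)
    qed
  qed
qed

lemma interior_char:
  fixes A :: "'x::{metric_space, second_countable_topology} set"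
  assumes "closed A"
  shows "x \<in> interior A \<longleftrightarrow> (\<exists>m::nat. \<forall>j. dist x (dseq j) < 1 / Suc m \<longrightarrow> dseq j \<in> A)"
proof
  assume "x \<in> interior A"
  then obtain e where e: "e > 0" "ball x e \<subseteq> A" using mem_interior by blast
  obtain m where m: "inverse (real (Suc m)) < e" using reals_Archimedean[OF e(1)] by blast
  have "\<forall>j. dist x (dseq j) < 1 / Suc m \<longrightarrow> dseq j \<in> A"
  proof (intro allI impI)
    fix j assume "dist x (dseq j) < 1 / Suc m"
    then have "dist x (dseq j) < e" using m by (simp add: inverse_eq_divide)
    then show "dseq j \<in> A" using e(2) by (simp add: subset_iff)
  qed
  then show "\<exists>m::nat. \<forall>j. dist x (dseq j) < 1 / Suc m \<longrightarrow> dseq j \<in> A" by blast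
next
  assume "\<exists>m::nat. \<forall>j. dist x (dseq j) < 1 / Suc m \<longrightarrow> dseq j \<in> A"
  then obtain m :: nat where m: "\<forall>j. dist x (dseq j) < 1 / Suc m \<longrightarrow> dseq j \<in> A" by blast
  define r :: real where "r = 1 / Suc m"
  have r: "r > 0" unfolding r_def by simp
  have "ball x r \<subseteq> closure (dseq ` {i. dseq i \<in> ball x r})" by (rule dense_sub) simp
  also have "\<dots> \<subseteq> A"
  proof (rule closure_minimal[OF _ assms])
    show "dseq ` {i. dseq i \<in> ball x r} \<subseteq> A" using m unfolding r_def by auto
  qed
  finally have "ball x r \<subseteq> A" .
  then show "x \<in> interior A" using r by (meson mem_interior)
qed

lemma pred_interior:
  fixes A :: "'w \<Rightarrow> 'x::{metric_space, second_countable_topology} set"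
  assumes "random_compact M A"
  shows "Measurable.pred M (\<lambda>\<omega>. x \<in> interior (A \<omega>))"
proof -
  have [measurable]: "\<And>j. Measurable.pred M (\<lambda>\<omega>. dseq j \<in> A \<omega>)" using pred_mem[OF assms] by blast
  have p: "Measurable.pred M (\<lambda>\<omega>. \<exists>m::nat. \<forall>j. dist x (dseq j) < 1 / Suc m \<longrightarrow> dseq j \<in> A \<omega>)"
    by measurable
  show ?thesis
  proof (rule pred_congI[OF p])
    fix \<omega> assume w: "\<omega> \<in> space M"
    have c: "closed (A \<omega>)" using assms w unfolding random_compact_def by (simp add: compact_imp_closed)
    show "(\<exists>m::nat. \<forall>j. dist x (dseq j) < 1 / Suc m \<longrightarrow> dseq j \<in> A \<omega>) = (x \<in> interior (A \<omega>))"
      using interior_char[OF c] by simp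
  qed
qed

lemma pred_compose:
  assumes "Measurable.pred M P" "f \<in> M \<rightarrow>\<^sub>M M"
  shows "Measurable.pred M (\<lambda>\<omega>. P (f \<omega>))"
  using measurable_compose[OF assms(2) assms(1)] by (simp add: comp_def)

lemma infdist_rep_less:
  fixes y :: "'x::{metric_space, second_countable_topology}"
  shows "(infdist y (dseq ` S) < a) \<longleftrightarrow> ((S = {} \<and> 0 < a) \<or> (\<exists>j\<in>S. dist y (dseq j) < a))"
proof (cases "S = {}")
  case True then show ?thesis by (simp add: infdist_def)
next
  case False
  have ne: "(\<lambda>z. dist y z) ` dseq ` S \<noteq> {}" using False by blast
  have bd: "bdd_below ((\<lambda>z. dist y z) ` dseq ` S)" by (rule bdd_belowI[of _ 0]) auto
  have "infdist y (dseq ` S) = Inf ((\<lambda>z. dist y z) ` dseq ` S)"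
    using False by (simp add: infdist_def)
  then have "(infdist y (dseq ` S) < a) \<longleftrightarrow> (\<exists>z\<in>(\<lambda>z. dist y z) ` dseq ` S. z < a)"
    using cInf_less_iff[OF ne bd] by simp
  then show ?thesis using False by auto
qed

lemma meas_infdist_rep:
  fixes y :: "'w \<Rightarrow> 'x::{metric_space, second_countable_topology}"
  assumes [measurable]: "y \<in> borel_measurable M" and [measurable]: "\<And>j. Measurable.pred M (Q j)"
  shows "(\<lambda>\<omega>. infdist (y \<omega>) (dseq ` {j. Q j \<omega>})) \<in> borel_measurable M"
  unfolding borel_measurable_iff_less
proof
  fix a :: real
  have p: "Measurable.pred M (\<lambda>\<omega>. ((\<forall>j. \<not> Q j \<omega>) \<and> 0 < a) \<or> (\<exists>j. Q j \<omega> \<and> dist (y \<omega>) (dseq j) < a))"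
    by measurable
  have "Measurable.pred M (\<lambda>\<omega>. infdist (y \<omega>) (dseq ` {j. Q j \<omega>}) < a)"
    by (rule pred_congI[OF p]) (simp add: infdist_rep_less)
  then show "{w \<in> space M. infdist (y w) (dseq ` {j. Q j w}) < a} \<in> sets M"
    unfolding pred_def by simp
qed

lemma random_compact_rep:
  fixes K :: "'w \<Rightarrow> 'x::{metric_space, second_countable_topology} set"
  assumes [measurable]: "\<And>j. Measurable.pred M (Q j)"
    and "\<forall>\<omega>\<in>space M. compact (K \<omega>)"
    and rep: "\<forall>\<omega>\<in>space M. K \<omega> = closure (dseq ` {j. Q j \<omega>})"
  shows "random_compact M K"
  unfolding random_compact_def
proof (intro conjI assms(2) allI)
  fix x :: 'x
  have [measurable]: "(\<lambda>\<omega>. infdist x (dseq ` {j. Q j \<omega>})) \<in> borel_measurable M"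
    by (rule meas_infdist_rep) auto
  have m: "(\<lambda>\<omega>. if (\<exists>j. Q j \<omega>) then ereal (infdist x (dseq ` {j. Q j \<omega>})) else \<infinity>) \<in> borel_measurable M"
    by measurable
  show "(\<lambda>\<omega>. if K \<omega> = {} then \<infinity> else ereal (infdist x (K \<omega>))) \<in> borel_measurable M"
  proof (rule measurable_cong[THEN iffD1, OF _ m])
    fix \<omega> assume w: "\<omega> \<in> space M"
    have "K \<omega> = {} \<longleftrightarrow> \<not> (\<exists>j. Q j \<omega>)" using rep w by auto
    then show "(if (\<exists>j. Q j \<omega>) then ereal (infdist x (dseq ` {j. Q j \<omega>})) else \<infinity>) =
          (if K \<omega> = {} then \<infinity> else ereal (infdist x (K \<omega>)))"
      using rep w by (simp add: infdist_closure)
  qed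
qed


lemma threshold:
  fixes \<Phi> :: "'w \<Rightarrow> 'z::metric_space \<Rightarrow> real" and hz :: "'i::countable \<Rightarrow> 'z" and P :: "'i \<Rightarrow> 'w \<Rightarrow> bool"
  assumes meas: "\<And>i. (\<lambda>\<omega>. \<Phi> \<omega> (hz i)) \<in> borel_measurable M"
    and predP: "\<And>i. Measurable.pred M (P i)"
    and cpt: "\<And>\<omega>. \<omega> \<in> space M \<Longrightarrow> compact (closure (hz ` {i. P i \<omega>}))"
    and cont: "\<And>\<omega>. \<omega> \<in> space M \<Longrightarrow> continuous_on (closure (hz ` {i. P i \<omega>})) (\<Phi> \<omega>)"
    and pos: "\<And>\<omega> z. \<omega> \<in> space M \<Longrightarrow> z \<in> closure (hz ` {i. P i \<omega>}) \<Longrightarrow> \<Phi> \<omega> z > 0"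
  shows "\<exists>\<tau> \<in> borel_measurable M. \<forall>\<omega>\<in>space M. \<tau> \<omega> > 0 \<and> (\<forall>z \<in> closure (hz ` {i. P i \<omega>}). \<tau> \<omega> \<le> \<Phi> \<omega> z)"
proof -
  define \<mu> where "\<mu> \<omega> = (INF i. (if P i \<omega> then ereal (\<Phi> \<omega> (hz i)) else \<infinity>))" for \<omega>
  define \<tau> where "\<tau> \<omega> = real_of_ereal (min 1 (\<mu> \<omega>))" for \<omega>
  have [measurable]: "\<And>i. (\<lambda>\<omega>. \<Phi> \<omega> (hz i)) \<in> borel_measurable M" by (rule meas)
  have [measurable]: "\<And>i. Measurable.pred M (P i)" by (rule predP)
  have m\<mu>: "\<mu> \<in> borel_measurable M" unfolding \<mu>_def
    by (rule borel_measurable_INF) auto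
  have m\<tau>: "\<tau> \<in> borel_measurable M" unfolding \<tau>_def using m\<mu> by measurable
  have props: "\<tau> \<omega> > 0 \<and> (\<forall>z \<in> closure (hz ` {i. P i \<omega>}). \<tau> \<omega> \<le> \<Phi> \<omega> z)" if w: "\<omega> \<in> space M" for \<omega>
  proof -
    define K where "K = closure (hz ` {i. P i \<omega>})"
    obtain c where c: "c > 0" "\<forall>i. P i \<omega> \<longrightarrow> c \<le> \<Phi> \<omega> (hz i)"
    proof (cases "K = {}")
      case True
      then have "\<forall>i. \<not> P i \<omega>" unfolding K_def by auto
      then show ?thesis using that[of 1] by auto
    next
      case False
      obtain z0 where z0: "z0 \<in> K" "\<forall>z\<in>K. \<Phi> \<omega> z0 \<le> \<Phi> \<omega> z"
        using continuous_attains_inf[OF cpt[OF w] _ cont[OF w]] False unfolding K_def by blast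
      have "\<Phi> \<omega> z0 > 0" using pos[OF w] z0(1) unfolding K_def by blast
      moreover have "\<forall>i. P i \<omega> \<longrightarrow> \<Phi> \<omega> z0 \<le> \<Phi> \<omega> (hz i)"
        using z0(2) closure_subset[of "hz ` {i. P i \<omega>}"] unfolding K_def by blast
      ultimately show ?thesis using that by blast
    qed
    have lb: "ereal c \<le> \<mu> \<omega>" unfolding \<mu>_def
      by (rule INF_greatest) (use c in auto)
    have ub0: "\<mu> \<omega> \<le> (if P i \<omega> then ereal (\<Phi> \<omega> (hz i)) else \<infinity>)" for i
      unfolding \<mu>_def by (rule INF_lower) simp
    have ub: "\<mu> \<omega> \<le> ereal (\<Phi> \<omega> (hz i))" if "P i \<omega>" for i using ub0[of i] that by simp
    define t where "t = min 1 c"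
    have t1: "t > 0" using c(1) unfolding t_def by simp
    have t2: "ereal t \<le> min 1 (\<mu> \<omega>)"
    proof (rule min.boundedI)
      have "t \<le> 1" unfolding t_def by simp
      then show "ereal t \<le> 1" by (simp add: one_ereal_def)
      have "ereal t \<le> ereal c" unfolding t_def by simp
      then show "ereal t \<le> \<mu> \<omega>" using lb by (rule order_trans)
    qed
    note t = t1 t2
    have fin: "\<bar>min 1 (\<mu> \<omega>)\<bar> \<noteq> \<infinity>"
    proof -
      have a: "min 1 (\<mu> \<omega>) \<le> 1" by simp
      have b: "ereal t \<le> min 1 (\<mu> \<omega>)" by (rule t(2))
      show ?thesis
      proof (cases "min 1 (\<mu> \<omega>)" rule: ereal_cases)
        case (real r) then show ?thesis by simp
      next
        case PInf then show ?thesis using a by simp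
      next
        case MInf then show ?thesis using b by simp
      qed
    qed
    have eq: "ereal (\<tau> \<omega>) = min 1 (\<mu> \<omega>)" unfolding \<tau>_def using fin by (simp add: ereal_real)
    have tpos: "\<tau> \<omega> > 0" using t eq by (metis ereal_less(2) less_le_trans ereal_less_eq(3))
    have tle: "\<And>i. P i \<omega> \<Longrightarrow> \<tau> \<omega> \<le> \<Phi> \<omega> (hz i)"
    proof -
      fix i assume "P i \<omega>"
      then have "min 1 (\<mu> \<omega>) \<le> ereal (\<Phi> \<omega> (hz i))" using ub by (meson min.coboundedI2)
      then show "\<tau> \<omega> \<le> \<Phi> \<omega> (hz i)" using eq by (metis ereal_less_eq(3))
    qed
    have cl: "closed {z \<in> K. \<tau> \<omega> \<le> \<Phi> \<omega> z}"
      by (rule continuous_on_closed_Collect_le) (use cont[OF w] in \<open>auto simp: K_def\<close>)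
    have "hz ` {i. P i \<omega>} \<subseteq> {z \<in> K. \<tau> \<omega> \<le> \<Phi> \<omega> z}"
      using tle closure_subset[of "hz ` {i. P i \<omega>}"] unfolding K_def by blast
    then have "K \<subseteq> {z \<in> K. \<tau> \<omega> \<le> \<Phi> \<omega> z}" unfolding K_def using cl K_def closure_minimal by blast
    then show ?thesis using tpos unfolding K_def by blast
  qed
  show ?thesis using m\<tau> props by blast
qed


lemma threshold2:
  fixes \<Phi> :: "'w \<Rightarrow> 'z::metric_space \<Rightarrow> real" and hz :: "'i::countable \<Rightarrow> 'z"
  assumes meas: "\<And>i. (\<lambda>\<omega>. \<Phi> \<omega> (hz i)) \<in> borel_measurable M"
    and predQ: "\<And>i. Measurable.pred M (Q i)" and predD: "Measurable.pred M deg"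
    and rep: "\<And>\<omega>. \<omega> \<in> space M \<Longrightarrow> \<not> deg \<omega> \<Longrightarrow> closure (hz ` {i. Q i \<omega>}) = K \<omega>"
    and cpt: "\<And>\<omega>. \<omega> \<in> space M \<Longrightarrow> \<not> deg \<omega> \<Longrightarrow> compact (K \<omega>)"
    and cont: "\<And>\<omega>. \<omega> \<in> space M \<Longrightarrow> \<not> deg \<omega> \<Longrightarrow> continuous_on (K \<omega>) (\<Phi> \<omega>)"
    and pos: "\<And>\<omega> z. \<omega> \<in> space M \<Longrightarrow> \<not> deg \<omega> \<Longrightarrow> z \<in> K \<omega> \<Longrightarrow> \<Phi> \<omega> z > 0"
  shows "\<exists>\<tau> \<in> borel_measurable M. \<forall>\<omega>\<in>space M. \<tau> \<omega> > 0 \<and> (\<not> deg \<omega> \<longrightarrow> (\<forall>z\<in>K \<omega>. \<tau> \<omega> \<le> \<Phi> \<omega> z))"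
proof -
  have [measurable]: "\<And>i. Measurable.pred M (Q i)" "Measurable.pred M deg" using predQ predD by auto
  have cl: "closure (hz ` {i. \<not> deg \<omega> \<and> Q i \<omega>}) = (if deg \<omega> then {} else K \<omega>)" if "\<omega> \<in> space M" for \<omega>
    using rep[OF that] by auto
  have "\<exists>\<tau> \<in> borel_measurable M. \<forall>\<omega>\<in>space M. \<tau> \<omega> > 0 \<and>
     (\<forall>z \<in> closure (hz ` {i. \<not> deg \<omega> \<and> Q i \<omega>}). \<tau> \<omega> \<le> \<Phi> \<omega> z)"
  proof (rule threshold[where \<Phi>=\<Phi> and hz=hz and M=M, OF meas])
    show "\<And>i. Measurable.pred M (\<lambda>\<omega>. \<not> deg \<omega> \<and> Q i \<omega>)" by measurable
    show "\<And>\<omega>. \<omega> \<in> space M \<Longrightarrow> compact (closure (hz ` {i. \<not> deg \<omega> \<and> Q i \<omega>}))"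
      using cl cpt by simp
    show "\<And>\<omega>. \<omega> \<in> space M \<Longrightarrow> continuous_on (closure (hz ` {i. \<not> deg \<omega> \<and> Q i \<omega>})) (\<Phi> \<omega>)"
      using cl cont by simp
    show "\<And>\<omega> z. \<omega> \<in> space M \<Longrightarrow> z \<in> closure (hz ` {i. \<not> deg \<omega> \<and> Q i \<omega>}) \<Longrightarrow> \<Phi> \<omega> z > 0"
      using cl pos by (metis empty_iff)
  qed
  then show ?thesis using cl by (metis (no_types, lifting))
qed

lemma img2: "(\<lambda>t. (f (fst t), f (snd t))) ` {t. A (fst t) \<and> B (snd t)} = f ` {i. A i} \<times> f ` {j. B j}"
proof
  show "(\<lambda>t. (f (fst t), f (snd t))) ` {t. A (fst t) \<and> B (snd t)} \<subseteq> f ` {i. A i} \<times> f ` {j. B j}" by auto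
  show "f ` {i. A i} \<times> f ` {j. B j} \<subseteq> (\<lambda>t. (f (fst t), f (snd t))) ` {t. A (fst t) \<and> B (snd t)}"
  proof
    fix p assume "p \<in> f ` {i. A i} \<times> f ` {j. B j}"
    then obtain i j where "A i" "B j" "p = (f i, f j)" by blast
    then show "p \<in> (\<lambda>t. (f (fst t), f (snd t))) ` {t. A (fst t) \<and> B (snd t)}"
      by (intro image_eqI[of _ _ "(i, j)"]) auto
  qed
qed

lemma img3: "(\<lambda>t. (f (fst t), f (fst (snd t)), f (snd (snd t)))) ` {t. A (fst t) \<and> B (fst (snd t)) \<and> C (snd (snd t))}
   = f ` {i. A i} \<times> f ` {j. B j} \<times> f ` {k. C k}"
proof
  show "(\<lambda>t. (f (fst t), f (fst (snd t)), f (snd (snd t)))) ` {t. A (fst t) \<and> B (fst (snd t)) \<and> C (snd (snd t))}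
     \<subseteq> f ` {i. A i} \<times> f ` {j. B j} \<times> f ` {k. C k}" by auto
  show "f ` {i. A i} \<times> f ` {j. B j} \<times> f ` {k. C k} \<subseteq>
     (\<lambda>t. (f (fst t), f (fst (snd t)), f (snd (snd t)))) ` {t. A (fst t) \<and> B (fst (snd t)) \<and> C (snd (snd t))}"
  proof
    fix p assume "p \<in> f ` {i. A i} \<times> f ` {j. B j} \<times> f ` {k. C k}"
    then obtain i j k where "A i" "B j" "C k" "p = (f i, f j, f k)" by blast
    then show "p \<in> (\<lambda>t. (f (fst t), f (fst (snd t)), f (snd (snd t)))) ` {t. A (fst t) \<and> B (fst (snd t)) \<and> C (snd (snd t))}"
      by (intro image_eqI[of _ _ "(i, j, k)"]) auto
  qed
qed

lemma cont_comp_univ: "continuous_on UNIV g \<Longrightarrow> continuous_on S f \<Longrightarrow> continuous_on S (\<lambda>x. g (f x))"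
  using continuous_on_compose2[of UNIV g S f] by auto

lemma regular_nonempty:
  fixes A :: "'x::{metric_space, second_countable_topology} set"
  assumes "closed A" "A = closure (interior A)" "A \<noteq> {}"
  shows "\<exists>k. dseq k \<in> interior A"
proof -
  have "interior A \<noteq> {}" using assms(2,3) by auto
  then show ?thesis using dseq_dense[of "interior A"] by auto
qed

lemma compl_nonempty:
  fixes A :: "'x::{metric_space, second_countable_topology} set"
  assumes "closed A" "y \<notin> interior A"
  shows "\<exists>l. dseq l \<notin> A"
proof -
  have "- A \<noteq> {}"
  proof
    assume "- A = {}"
    then have "A = UNIV" by auto
    then show False using assms(2) by simp
  qed
  moreover have "open (- A)" using assms(1) by auto
  ultimately show ?thesis using dseq_dense[of "- A"] by auto
qed

lemma infdist_regular:
  fixes A :: "'x::{metric_space, second_countable_topology} set"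
  assumes "closed A" "A = closure (interior A)"
  shows "infdist y (dseq ` {k. dseq k \<in> interior A}) = infdist y A"
  using regular_rep[OF assms] infdist_closure by metis

lemma infdist_compl:
  fixes A :: "'x::{metric_space, second_countable_topology} set"
  assumes "closed A"
  shows "infdist y (dseq ` {k. dseq k \<notin> A}) = infdist y (- interior A)"
proof -
  have "infdist y (dseq ` {k. dseq k \<notin> A}) = infdist y (closure (dseq ` {k. dseq k \<in> - A}))"
    by (simp add: infdist_closure)
  also have "\<dots> = infdist y (- interior A)" using compl_rep[OF assms] by simp
  finally show ?thesis .
qed


context
  fixes M :: "'w measure" and \<theta> :: "'w \<Rightarrow> 'w" and \<phi> :: "'w \<Rightarrow> 'x::polish_space \<Rightarrow> 'x" and N :: "'w \<Rightarrow> 'x set"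
  assumes mds: "mds M \<theta>" and rh: "random_homeo M \<phi>" and blk: "random_isol_block M \<theta> \<phi> N"
    and regN: "\<forall>\<omega>\<in>space M. N \<omega> = closure (interior (N \<omega>))"
begin

lemma hphi: "homeos M \<phi>" using rh unfolding random_homeo_def homeos_def by blast
lemma rcN: "random_compact M N" using blk unfolding random_isol_block_def by blast
lemma compactN: "\<omega> \<in> space M \<Longrightarrow> compact (N \<omega>)" using rcN unfolding random_compact_def by blast
lemma closedN: "\<omega> \<in> space M \<Longrightarrow> closed (N \<omega>)" using compactN by (simp add: compact_imp_closed)
lemma thsp: "\<omega> \<in> space M \<Longrightarrow> \<theta> \<omega> \<in> space M" using mds_facts(4)[OF mds] .
lemma regN': "\<omega> \<in> space M \<Longrightarrow> N \<omega> = closure (interior (N \<omega>))" using regN by blast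

lemma th_meas[measurable]: "\<theta> \<in> M \<rightarrow>\<^sub>M M" using mds_facts(2)[OF mds] .
lemma phi_meas[measurable]: "(\<lambda>\<omega>. \<phi> \<omega> x) \<in> borel_measurable M" using rh unfolding random_homeo_def by blast
lemma phi_th_meas[measurable]: "(\<lambda>\<omega>. \<phi> (\<theta> \<omega>) x) \<in> borel_measurable M"
  using measurable_compose[OF th_meas phi_meas] by (simp add: comp_def)
lemma pN[measurable]: "Measurable.pred M (\<lambda>\<omega>. x \<in> N \<omega>)" using pred_mem[OF rcN] .
lemma pIN[measurable]: "Measurable.pred M (\<lambda>\<omega>. x \<in> interior (N \<omega>))" using pred_interior[OF rcN] .
lemma pN1[measurable]: "Measurable.pred M (\<lambda>\<omega>. x \<in> N (\<theta> \<omega>))" using pred_compose[OF pN th_meas] .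
lemma pIN1[measurable]: "Measurable.pred M (\<lambda>\<omega>. x \<in> interior (N (\<theta> \<omega>)))" using pred_compose[OF pIN th_meas] .
lemma pIN2[measurable]: "Measurable.pred M (\<lambda>\<omega>. x \<in> interior (N (\<theta> (\<theta> \<omega>))))" using pred_compose[OF pIN1 th_meas] .

lemma BLKphi:
  assumes w: "\<omega> \<in> space M" and "v \<in> N \<omega>" "\<phi> \<omega> v \<in> N (\<theta> \<omega>)" "\<phi> (\<theta> \<omega>) (\<phi> \<omega> v) \<in> N (\<theta> (\<theta> \<omega>))"
  shows "\<phi> \<omega> v \<in> interior (N (\<theta> \<omega>))"
proof -
  have w1: "\<theta> \<omega> \<in> space M" using thsp[OF w] .
  have b: "\<phi> (theta_int M \<theta> (-1) (\<theta> \<omega>)) ` N (theta_int M \<theta> (-1) (\<theta> \<omega>)) \<inter> N (\<theta> \<omega>)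
            \<inter> phi_int M \<theta> \<phi> (-1) (\<theta> (\<theta> \<omega>)) ` N (\<theta> (\<theta> \<omega>)) \<subseteq> interior (N (\<theta> \<omega>))"
    using blk w1 unfolding random_isol_block_def by blast
  have e1: "theta_int M \<theta> (-1) (\<theta> \<omega>) = \<omega>" using mds_facts(6)[OF mds w] by simp
  have e2: "phi_int M \<theta> \<phi> (-1) (\<theta> (\<theta> \<omega>)) = inv (\<phi> (\<theta> \<omega>))" using phi_int_m1_theta[OF mds w1] .
  have "\<phi> \<omega> v = inv (\<phi> (\<theta> \<omega>)) (\<phi> (\<theta> \<omega>) (\<phi> \<omega> v))" using homeos_inj[OF hphi w1] by simp
  then have "\<phi> \<omega> v \<in> inv (\<phi> (\<theta> \<omega>)) ` N (\<theta> (\<theta> \<omega>))" using assms(4) by blast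
  moreover have "\<phi> \<omega> v \<in> \<phi> \<omega> ` N \<omega>" using assms(2) by blast
  ultimately have "\<phi> \<omega> v \<in> \<phi> \<omega> ` N \<omega> \<inter> N (\<theta> \<omega>) \<inter> inv (\<phi> (\<theta> \<omega>)) ` N (\<theta> (\<theta> \<omega>))"
    using assms(3) by (intro IntI)
  moreover have "\<phi> \<omega> ` N \<omega> \<inter> N (\<theta> \<omega>) \<inter> inv (\<phi> (\<theta> \<omega>)) ` N (\<theta> (\<theta> \<omega>)) \<subseteq> interior (N (\<theta> \<omega>))"
    using b unfolding e1 e2 .
  ultimately show ?thesis by (rule subsetD[rotated])
qed

lemma phi_cont_on: "\<omega> \<in> space M \<Longrightarrow> continuous_on S f \<Longrightarrow> continuous_on S (\<lambda>x. \<phi> \<omega> (f x))"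
  using cont_comp_univ homeos_cont[OF hphi] by blast

lemma eps_exists:
  "\<exists>\<epsilon>\<in>borel_measurable M. \<forall>\<omega>\<in>space M. \<epsilon> \<omega> > 0 \<and>
     (\<forall>z y. z \<in> N \<omega> \<and> \<phi> \<omega> z \<in> N (\<theta> \<omega>) \<and> \<phi> (\<theta> \<omega>) (\<phi> \<omega> z) \<in> N (\<theta> (\<theta> \<omega>)) \<and> y \<in> N \<omega>
        \<and> \<phi> \<omega> y \<notin> interior (N (\<theta> \<omega>)) \<longrightarrow> \<epsilon> \<omega> \<le> dist z y)"
proof -
  define A2 where "A2 \<omega> = (dseq ` {k. dseq k \<in> interior (N (\<theta> (\<theta> \<omega>)))} :: 'x set)" for \<omega>
  define C1 where "C1 \<omega> = (dseq ` {l. dseq l \<notin> N (\<theta> \<omega>)} :: 'x set)" for \<omega>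
  define \<Phi> where "\<Phi> \<omega> p = dist (\<phi> \<omega> (fst p)) (fst (snd p)) + infdist (\<phi> (\<theta> \<omega>) (fst (snd p))) (A2 \<omega>)
      + infdist (\<phi> \<omega> (snd (snd p))) (C1 \<omega>) + dist (fst p) (snd (snd p))" for \<omega> and p :: "'x \<times> 'x \<times> 'x"
  define hz where "hz t = ((dseq (fst t), dseq (fst (snd t)), dseq (snd (snd t))) :: 'x \<times> 'x \<times> 'x)" for t :: "nat \<times> nat \<times> nat"
  define deg where "deg \<omega> = ((\<forall>k. dseq k \<notin> interior (N (\<theta> (\<theta> \<omega>)))) \<or> (\<forall>l. dseq l \<in> N (\<theta> \<omega>)))" for \<omega>
  define Q where "Q t \<omega> = (dseq (fst t) \<in> interior (N \<omega>) \<and> dseq (fst (snd t)) \<in> interior (N (\<theta> \<omega>))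
       \<and> dseq (snd (snd t)) \<in> interior (N \<omega>))" for t :: "nat \<times> nat \<times> nat" and \<omega>
  define K where "K \<omega> = N \<omega> \<times> N (\<theta> \<omega>) \<times> N \<omega>" for \<omega>
  have A2eq: "infdist y (A2 \<omega>) = infdist y (N (\<theta> (\<theta> \<omega>)))" if "\<omega> \<in> space M" for y \<omega>
    unfolding A2_def using infdist_regular[OF closedN regN'] thsp[OF thsp[OF that]] by blast
  have C1eq: "infdist y (C1 \<omega>) = infdist y (- interior (N (\<theta> \<omega>)))" if "\<omega> \<in> space M" for y \<omega>
    unfolding C1_def using infdist_compl[OF closedN] thsp[OF that] by blast
  have "\<exists>\<tau>\<in>borel_measurable M. \<forall>\<omega>\<in>space M. \<tau> \<omega> > 0 \<and> (\<not> deg \<omega> \<longrightarrow> (\<forall>z\<in>K \<omega>. \<tau> \<omega> \<le> \<Phi> \<omega> z))"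
  proof (rule threshold2[of \<Phi> hz M Q deg K])
    fix t :: "nat \<times> nat \<times> nat"
    have [measurable]: "(\<lambda>\<omega>. infdist (\<phi> (\<theta> \<omega>) (dseq (fst (snd t)))) (A2 \<omega>)) \<in> borel_measurable M"
      unfolding A2_def by (rule meas_infdist_rep) measurable
    have [measurable]: "(\<lambda>\<omega>. infdist (\<phi> \<omega> (dseq (snd (snd t)))) (C1 \<omega>)) \<in> borel_measurable M"
      unfolding C1_def by (rule meas_infdist_rep) measurable
    show "(\<lambda>\<omega>. \<Phi> \<omega> (hz t)) \<in> borel_measurable M"
      unfolding \<Phi>_def hz_def fst_conv snd_conv by measurable
    show "Measurable.pred M (Q t)" unfolding Q_def by measurable
  next
    show "Measurable.pred M deg" unfolding deg_def by measurable
  next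
    fix \<omega> assume w: "\<omega> \<in> space M" and nd: "\<not> deg \<omega>"
    have w1: "\<theta> \<omega> \<in> space M" using thsp[OF w] .
    show "closure (hz ` {t. Q t \<omega>}) = K \<omega>"
    proof -
      have "hz ` {t. Q t \<omega>} = dseq ` {i. dseq i \<in> interior (N \<omega>)} \<times> dseq ` {j. dseq j \<in> interior (N (\<theta> \<omega>))}
          \<times> dseq ` {k. dseq k \<in> interior (N \<omega>)}"
        unfolding hz_def Q_def by (rule img3)
      then show ?thesis unfolding K_def
        using regular_rep[OF closedN[OF w] regN'[OF w]] regular_rep[OF closedN[OF w1] regN'[OF w1]]
        by (simp add: closure_Times)
    qed
    show "compact (K \<omega>)" unfolding K_def using compactN[OF w] compactN[OF w1] by (simp add: compact_Times)
    show "continuous_on (K \<omega>) (\<Phi> \<omega>)" unfolding \<Phi>_def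
      by (intro continuous_intros phi_cont_on[OF w] phi_cont_on[OF w1])
    fix z assume z: "z \<in> K \<omega>"
    obtain x u y where xuy: "z = (x, u, y)" by (cases z) auto
    have x: "x \<in> N \<omega>" and u: "u \<in> N (\<theta> \<omega>)" and y: "y \<in> N \<omega>" using z xuy K_def by auto
    have ne2: "N (\<theta> (\<theta> \<omega>)) \<noteq> {}" using nd unfolding deg_def using interior_subset by blast
    have ne1: "dseq ` {l. dseq l \<notin> N (\<theta> \<omega>)} \<noteq> {}" using nd unfolding deg_def by blast
    have nn: "0 \<le> infdist (\<phi> (\<theta> \<omega>) u) (A2 \<omega>)" "0 \<le> infdist (\<phi> \<omega> y) (C1 \<omega>)"
      by (simp_all add: infdist_nonneg)
    show "\<Phi> \<omega> z > 0"
    proof (rule ccontr)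
      assume "\<not> \<Phi> \<omega> z > 0"
      then have le: "dist (\<phi> \<omega> x) u + infdist (\<phi> (\<theta> \<omega>) u) (A2 \<omega>) + infdist (\<phi> \<omega> y) (C1 \<omega>) + dist x y \<le> 0"
        unfolding \<Phi>_def xuy by simp
      have d: "0 \<le> dist (\<phi> \<omega> x) u" "0 \<le> dist x y" by simp_all
      have z1: "dist (\<phi> \<omega> x) u = 0" using le nn d by linarith
      have z2: "infdist (\<phi> (\<theta> \<omega>) u) (A2 \<omega>) = 0" using le nn d by linarith
      have z3: "infdist (\<phi> \<omega> y) (C1 \<omega>) = 0" using le nn d by linarith
      have z4: "dist x y = 0" using le nn d by linarith
      have "\<phi> (\<theta> \<omega>) u \<in> N (\<theta> (\<theta> \<omega>))"
        using z2 A2eq[OF w] in_closed_iff_infdist_zero[OF closedN[OF thsp[OF w1]] ne2] by simp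
      moreover have "\<phi> \<omega> y \<in> closure (C1 \<omega>)"
        using z3 in_closure_iff_infdist_zero[of "C1 \<omega>"] ne1 unfolding C1_def by blast
      then have "\<phi> \<omega> y \<notin> interior (N (\<theta> \<omega>))"
        using compl_rep[OF closedN[OF w1]] unfolding C1_def by auto
      moreover have "u = \<phi> \<omega> x" "y = x" using z1 z4 by auto
      ultimately show False using BLKphi[OF w x] u by auto
    qed
  qed
  then obtain \<tau> where \<tau>m: "\<tau> \<in> borel_measurable M"
    and \<tau>: "\<forall>\<omega>\<in>space M. \<tau> \<omega> > 0 \<and> (\<not> deg \<omega> \<longrightarrow> (\<forall>z\<in>K \<omega>. \<tau> \<omega> \<le> \<Phi> \<omega> z))"
    by blast
  show ?thesis
  proof (intro bexI[OF _ \<tau>m] ballI conjI allI impI)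
    fix \<omega> assume w: "\<omega> \<in> space M"
    show "\<tau> \<omega> > 0" using \<tau> w by blast
    fix z y assume a: "z \<in> N \<omega> \<and> \<phi> \<omega> z \<in> N (\<theta> \<omega>) \<and> \<phi> (\<theta> \<omega>) (\<phi> \<omega> z) \<in> N (\<theta> (\<theta> \<omega>)) \<and> y \<in> N \<omega>
        \<and> \<phi> \<omega> y \<notin> interior (N (\<theta> \<omega>))"
    have w1: "\<theta> \<omega> \<in> space M" using thsp[OF w] .
    have w2: "\<theta> (\<theta> \<omega>) \<in> space M" using thsp[OF w1] .
    have "\<exists>k. dseq k \<in> interior (N (\<theta> (\<theta> \<omega>)))"
      using regular_nonempty[OF closedN[OF w2] regN'[OF w2]] a by blast
    moreover have "\<exists>l. dseq l \<notin> N (\<theta> \<omega>)" using compl_nonempty[OF closedN[OF w1]] a by blast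
    ultimately have nd: "\<not> deg \<omega>" unfolding deg_def by blast
    have zK: "(z, \<phi> \<omega> z, y) \<in> K \<omega>" using a unfolding K_def by auto
    have "infdist (\<phi> (\<theta> \<omega>) (\<phi> \<omega> z)) (A2 \<omega>) = 0" using A2eq[OF w] a by simp
    moreover have "infdist (\<phi> \<omega> y) (C1 \<omega>) = 0" using C1eq[OF w] a by simp
    ultimately have "\<Phi> \<omega> (z, \<phi> \<omega> z, y) = dist z y" unfolding \<Phi>_def by simp
    moreover have t: "\<not> deg \<omega> \<longrightarrow> (\<forall>z\<in>K \<omega>. \<tau> \<omega> \<le> \<Phi> \<omega> z)" using bspec[OF \<tau> w] by (rule conjunct2)
    then have "\<tau> \<omega> \<le> \<Phi> \<omega> (z, \<phi> \<omega> z, y)" using nd zK by blast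
    ultimately show "\<tau> \<omega> \<le> dist z y" by simp
  qed
qed


lemma thsp2: "\<omega> \<in> space M \<Longrightarrow> \<theta> (\<theta> \<omega>) \<in> space M" using thsp by blast

lemma dN_le:
  assumes h\<psi>: "homeos M \<psi>" and w: "\<omega> \<in> space M" and x: "x \<in> N (inv_into (space M) \<theta> \<omega>)"
  shows "dist (\<phi> (inv_into (space M) \<theta> \<omega>) x) (\<psi> (inv_into (space M) \<theta> \<omega>) x) \<le> dN M \<theta> N \<phi> \<psi> \<omega>"
proof -
  define w' where "w' = inv_into (space M) \<theta> \<omega>"
  have ws: "w' \<in> space M" unfolding w'_def using mds_facts(5)[OF mds w] .
  define S1 where "S1 = insert 0 ((\<lambda>x. dist (\<phi> w' x) (\<psi> w' x)) ` N w')"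
  define S2 where "S2 = insert 0 ((\<lambda>y. dist (phi_int M \<theta> \<phi> (-1) (\<theta> \<omega>) y) (phi_int M \<theta> \<psi> (-1) (\<theta> \<omega>) y)) ` N (\<theta> \<omega>))"
  have dn: "dN M \<theta> N \<phi> \<psi> \<omega> = Sup S1 + Sup S2" unfolding dN_def S1_def S2_def w'_def by simp
  have c1: "continuous_on (N w') (\<lambda>x. dist (\<phi> w' x) (\<psi> w' x))"
    by (intro continuous_intros homeos_cont[OF hphi ws] homeos_cont[OF h\<psi> ws])
  have "bounded ((\<lambda>x. dist (\<phi> w' x) (\<psi> w' x)) ` N w')"
    by (rule compact_imp_bounded, rule compact_continuous_image[OF c1 compactN[OF ws]])
  then have b1: "bdd_above S1" unfolding S1_def by (simp add: bounded_imp_bdd_above)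
  have e\<phi>: "phi_int M \<theta> \<phi> (-1) (\<theta> \<omega>) = inv (\<phi> \<omega>)" using phi_int_m1_theta[OF mds w] .
  have e\<psi>: "phi_int M \<theta> \<psi> (-1) (\<theta> \<omega>) = inv (\<psi> \<omega>)" using phi_int_m1_theta[OF mds w] .
  have c2: "continuous_on (N (\<theta> \<omega>)) (\<lambda>y. dist (inv (\<phi> \<omega>) y) (inv (\<psi> \<omega>) y))"
    by (intro continuous_intros homeos_inv_cont[OF hphi w] homeos_inv_cont[OF h\<psi> w])
  have "bounded ((\<lambda>y. dist (inv (\<phi> \<omega>) y) (inv (\<psi> \<omega>) y)) ` N (\<theta> \<omega>))"
    by (rule compact_imp_bounded, rule compact_continuous_image[OF c2 compactN[OF thsp[OF w]]])
  then have b2: "bdd_above S2" unfolding S2_def e\<phi> e\<psi> by (simp add: bounded_imp_bdd_above)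
  have "dist (\<phi> w' x) (\<psi> w' x) \<le> Sup S1" using x unfolding S1_def w'_def
    by (intro cSup_upper b1[unfolded S1_def w'_def]) auto
  moreover have "0 \<le> Sup S2" by (rule cSup_upper[OF _ b2]) (simp add: S2_def)
  ultimately show ?thesis unfolding dn w'_def by simp
qed

context
  fixes \<epsilon> :: "'w \<Rightarrow> real" and L :: "'w \<Rightarrow> 'x set"
  assumes \<epsilon>good: "\<forall>\<omega>\<in>space M. \<forall>z y. z \<in> N \<omega> \<and> \<phi> \<omega> z \<in> N (\<theta> \<omega>) \<and> \<phi> (\<theta> \<omega>) (\<phi> \<omega> z) \<in> N (\<theta> (\<theta> \<omega>)) \<and> y \<in> N \<omega>
        \<and> \<phi> \<omega> y \<notin> interior (N (\<theta> \<omega>)) \<longrightarrow> \<epsilon> \<omega> \<le> dist z y"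
    and rcL: "random_compact M L" and rel: "rel_nbhd M L (exit_set \<theta> \<phi> N) N"
    and regL: "\<forall>\<omega>\<in>space M. L \<omega> = closure (interior (L \<omega>))"
    and near: "\<forall>\<omega>\<in>space M. \<forall>x\<in>L \<omega>. \<exists>y\<in>exit_set \<theta> \<phi> N \<omega>. dist x y < \<epsilon> \<omega>"
begin

lemma subL: "\<omega> \<in> space M \<Longrightarrow> L \<omega> \<subseteq> N \<omega>" using rel unfolding rel_nbhd_def by blast
lemma compactL: "\<omega> \<in> space M \<Longrightarrow> compact (L \<omega>)" using rcL unfolding random_compact_def by blast
lemma closedL: "\<omega> \<in> space M \<Longrightarrow> closed (L \<omega>)" using compactL by (simp add: compact_imp_closed)
lemma regL': "\<omega> \<in> space M \<Longrightarrow> L \<omega> = closure (interior (L \<omega>))" using regL by blast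
lemma exit_rel: "\<omega> \<in> space M \<Longrightarrow> x \<in> exit_set \<theta> \<phi> N \<omega> \<Longrightarrow> x \<in> (top_of_set (N \<omega>)) interior_of (L \<omega>)"
  using rel unfolding rel_nbhd_def by blast
lemma pL[measurable]: "Measurable.pred M (\<lambda>\<omega>. x \<in> L \<omega>)" using pred_mem[OF rcL] .
lemma pIL[measurable]: "Measurable.pred M (\<lambda>\<omega>. x \<in> interior (L \<omega>))" using pred_interior[OF rcL] .
lemma pL1[measurable]: "Measurable.pred M (\<lambda>\<omega>. x \<in> L (\<theta> \<omega>))" using pred_compose[OF pL th_meas] .

lemma clK_sub: "\<omega> \<in> space M \<Longrightarrow> closure (N \<omega> - L \<omega>) \<subseteq> N \<omega>"
  using closedN by (simp add: closure_minimal)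

lemma AVOIDphi:
  assumes w: "\<omega> \<in> space M" and x: "x \<in> L \<omega>" and a: "\<phi> \<omega> x \<in> N (\<theta> \<omega>)" "\<phi> (\<theta> \<omega>) (\<phi> \<omega> x) \<in> N (\<theta> (\<theta> \<omega>))"
  shows False
proof -
  obtain y where y: "y \<in> exit_set \<theta> \<phi> N \<omega>" "dist x y < \<epsilon> \<omega>" using near w x by blast
  have yy: "y \<in> N \<omega>" "\<phi> \<omega> y \<notin> interior (N (\<theta> \<omega>))" using y(1) unfolding exit_set_def by auto
  have "x \<in> N \<omega>" using subL[OF w] x by blast
  then have "\<epsilon> \<omega> \<le> dist x y" using bspec[OF \<epsilon>good w] a yy by blast
  then show False using y(2) by simp
qed

lemma EXITINphi:
  assumes w: "\<omega> \<in> space M" and x: "x \<in> closure (N \<omega> - L \<omega>)"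
  shows "\<phi> \<omega> x \<in> interior (N (\<theta> \<omega>))"
proof (rule ccontr)
  assume "\<phi> \<omega> x \<notin> interior (N (\<theta> \<omega>))"
  moreover have "x \<in> N \<omega>" using clK_sub[OF w] x by blast
  ultimately have "x \<in> exit_set \<theta> \<phi> N \<omega>" unfolding exit_set_def by blast
  then have "x \<notin> closure (N \<omega> - L \<omega>)" using exit_rel[OF w] relint_not_cl by blast
  then show False using x by blast
qed

lemma SEPphi:
  assumes w: "\<omega> \<in> space M" and x: "x \<in> L \<omega>"
  shows "\<phi> \<omega> x \<notin> closure (N (\<theta> \<omega>) - L (\<theta> \<omega>))"
proof
  assume u: "\<phi> \<omega> x \<in> closure (N (\<theta> \<omega>) - L (\<theta> \<omega>))"
  have w1: "\<theta> \<omega> \<in> space M" using thsp[OF w] .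
  have uN: "\<phi> \<omega> x \<in> N (\<theta> \<omega>)" using clK_sub[OF w1] u by blast
  have "\<phi> (\<theta> \<omega>) (\<phi> \<omega> x) \<notin> N (\<theta> (\<theta> \<omega>))" using AVOIDphi[OF w x uN] by blast
  then have "\<phi> (\<theta> \<omega>) (\<phi> \<omega> x) \<notin> interior (N (\<theta> (\<theta> \<omega>)))" using interior_subset by blast
  then have "\<phi> \<omega> x \<in> exit_set \<theta> \<phi> N (\<theta> \<omega>)" using uN unfolding exit_set_def by blast
  then have "\<phi> \<omega> x \<notin> closure (N (\<theta> \<omega>) - L (\<theta> \<omega>))" using exit_rel[OF w1] relint_not_cl by blast
  then show False using u by blast
qed

lemma rcK: "random_compact M (\<lambda>\<omega>. closure (N \<omega> - L \<omega>))"
proof (rule random_compact_rep[where Q = "\<lambda>j \<omega>. dseq j \<in> interior (N \<omega>) \<and> dseq j \<notin> L \<omega>"])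
  show "\<And>j. Measurable.pred M (\<lambda>\<omega>. dseq j \<in> interior (N \<omega>) \<and> dseq j \<notin> L \<omega>)" by measurable
  show "\<forall>\<omega>\<in>space M. compact (closure (N \<omega> - L \<omega>))"
  proof
    fix \<omega> assume w: "\<omega> \<in> space M"
    have "compact (N \<omega> \<inter> closure (N \<omega> - L \<omega>))" by (rule compact_Int_closed[OF compactN[OF w] closed_closure])
    moreover have "N \<omega> \<inter> closure (N \<omega> - L \<omega>) = closure (N \<omega> - L \<omega>)" using clK_sub[OF w] by blast
    ultimately show "compact (closure (N \<omega> - L \<omega>))" by simp
  qed
  show "\<forall>\<omega>\<in>space M. closure (N \<omega> - L \<omega>) = closure (dseq ` {j. dseq j \<in> interior (N \<omega>) \<and> dseq j \<notin> L \<omega>})"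
  proof
    fix \<omega> assume w: "\<omega> \<in> space M"
    have "{j. dseq j \<in> interior (N \<omega>) \<and> dseq j \<notin> L \<omega>} = {j. dseq j \<in> interior (N \<omega>) \<inter> - L \<omega>}" by auto
    then show "closure (N \<omega> - L \<omega>) = closure (dseq ` {j. dseq j \<in> interior (N \<omega>) \<and> dseq j \<notin> L \<omega>})"
      using diff_rep[OF closedL[OF w] regN'[OF w]] by simp
  qed
qed

lemma filt_phi: "filtration_pair M \<theta> \<phi> N L (Inv M \<theta> \<phi> N)"
proof (rule GFL(1)[OF mds hphi rcN rcL rcK])
  show "\<forall>\<omega>\<in>space M. N \<omega> = closure (interior (N \<omega>)) \<and> L \<omega> = closure (interior (L \<omega>))" using regN regL by blast
  show "\<forall>\<omega>\<in>space M. L \<omega> \<subseteq> N \<omega>" using subL by blast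
  show "\<forall>\<omega>\<in>space M. \<forall>w\<in>N \<omega>. \<phi> \<omega> w \<in> N (\<theta> \<omega>) \<and> \<phi> (\<theta> \<omega>) (\<phi> \<omega> w) \<in> N (\<theta> (\<theta> \<omega>))
                  \<longrightarrow> \<phi> \<omega> w \<in> interior (N (\<theta> \<omega>))" using BLKphi by blast
  show "\<forall>\<omega>\<in>space M. \<forall>x\<in>L \<omega>. \<not> (\<phi> \<omega> x \<in> N (\<theta> \<omega>) \<and> \<phi> (\<theta> \<omega>) (\<phi> \<omega> x) \<in> N (\<theta> (\<theta> \<omega>)))"
    using AVOIDphi by blast
  show "\<forall>\<omega>\<in>space M. \<forall>x\<in>closure (N \<omega> - L \<omega>). \<phi> \<omega> x \<in> interior (N (\<theta> \<omega>))" using EXITINphi by blast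
  show "\<forall>\<omega>\<in>space M. \<phi> \<omega> ` L \<omega> \<inter> closure (N (\<theta> \<omega>) - L (\<theta> \<omega>)) = {}" using SEPphi by blast
qed


lemma tau1:
  "\<exists>\<tau>\<in>borel_measurable M. \<forall>\<omega>\<in>space M. \<tau> \<omega> > 0 \<and> (\<forall>g0 g1. (\<forall>x\<in>N \<omega>. dist (\<phi> \<omega> x) (g0 x) < \<tau> \<omega> / 2)
      \<and> (\<forall>x\<in>N (\<theta> \<omega>). dist (\<phi> (\<theta> \<omega>) x) (g1 x) < \<tau> \<omega> / 2)
      \<longrightarrow> (\<forall>v\<in>N \<omega>. g0 v \<in> N (\<theta> \<omega>) \<and> g1 (g0 v) \<in> N (\<theta> (\<theta> \<omega>)) \<longrightarrow> g0 v \<in> interior (N (\<theta> \<omega>))))"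
proof -
  define A2 where "A2 \<omega> = (dseq ` {k. dseq k \<in> interior (N (\<theta> (\<theta> \<omega>)))} :: 'x set)" for \<omega>
  define C1 where "C1 \<omega> = (dseq ` {l. dseq l \<notin> N (\<theta> \<omega>)} :: 'x set)" for \<omega>
  define \<Phi> where "\<Phi> \<omega> p = dist (\<phi> \<omega> (fst p)) (snd p) + infdist (\<phi> (\<theta> \<omega>) (snd p)) (A2 \<omega>)
      + infdist (snd p) (C1 \<omega>)" for \<omega> and p :: "'x \<times> 'x"
  define hz where "hz t = ((dseq (fst t), dseq (snd t)) :: 'x \<times> 'x)" for t :: "nat \<times> nat"
  define deg where "deg \<omega> = ((\<forall>k. dseq k \<notin> interior (N (\<theta> (\<theta> \<omega>)))) \<or> (\<forall>l. dseq l \<in> N (\<theta> \<omega>)))" for \<omega>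
  define Q where "Q t \<omega> = (dseq (fst t) \<in> interior (N \<omega>) \<and> dseq (snd t) \<in> interior (N (\<theta> \<omega>)))"
    for t :: "nat \<times> nat" and \<omega>
  define K where "K \<omega> = N \<omega> \<times> N (\<theta> \<omega>)" for \<omega>
  have A2eq: "infdist y (A2 \<omega>) = infdist y (N (\<theta> (\<theta> \<omega>)))" if "\<omega> \<in> space M" for y \<omega>
    unfolding A2_def using infdist_regular[OF closedN regN'] thsp2[OF that] by blast
  have C1eq: "infdist y (C1 \<omega>) = infdist y (- interior (N (\<theta> \<omega>)))" if "\<omega> \<in> space M" for y \<omega>
    unfolding C1_def using infdist_compl[OF closedN] thsp[OF that] by blast
  have "\<exists>\<tau>\<in>borel_measurable M. \<forall>\<omega>\<in>space M. \<tau> \<omega> > 0 \<and> (\<not> deg \<omega> \<longrightarrow> (\<forall>z\<in>K \<omega>. \<tau> \<omega> \<le> \<Phi> \<omega> z))"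
  proof (rule threshold2[of \<Phi> hz M Q deg K])
    fix t :: "nat \<times> nat"
    have [measurable]: "(\<lambda>\<omega>. infdist (\<phi> (\<theta> \<omega>) (dseq (snd t))) (A2 \<omega>)) \<in> borel_measurable M"
      unfolding A2_def by (rule meas_infdist_rep) measurable
    have [measurable]: "(\<lambda>\<omega>. infdist (dseq (snd t)) (C1 \<omega>)) \<in> borel_measurable M"
      unfolding C1_def by (rule meas_infdist_rep) measurable
    show "(\<lambda>\<omega>. \<Phi> \<omega> (hz t)) \<in> borel_measurable M"
      unfolding \<Phi>_def hz_def fst_conv snd_conv by measurable
    show "Measurable.pred M (Q t)" unfolding Q_def by measurable
  next
    show "Measurable.pred M deg" unfolding deg_def by measurable
  next
    fix \<omega> assume w: "\<omega> \<in> space M" and nd: "\<not> deg \<omega>"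
    have w1: "\<theta> \<omega> \<in> space M" using thsp[OF w] .
    show "closure (hz ` {t. Q t \<omega>}) = K \<omega>"
    proof -
      have "hz ` {t. Q t \<omega>} = dseq ` {i. dseq i \<in> interior (N \<omega>)} \<times> dseq ` {j. dseq j \<in> interior (N (\<theta> \<omega>))}"
        unfolding hz_def Q_def by (rule img2)
      then show ?thesis unfolding K_def
        using regular_rep[OF closedN[OF w] regN'[OF w]] regular_rep[OF closedN[OF w1] regN'[OF w1]]
        by (simp add: closure_Times)
    qed
    show "compact (K \<omega>)" unfolding K_def using compactN[OF w] compactN[OF w1] by (simp add: compact_Times)
    show "continuous_on (K \<omega>) (\<Phi> \<omega>)" unfolding \<Phi>_def
      by (intro continuous_intros phi_cont_on[OF w] phi_cont_on[OF w1])
    fix z assume z: "z \<in> K \<omega>"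
    obtain x u where xu: "z = (x, u)" by (cases z) auto
    have x: "x \<in> N \<omega>" and u: "u \<in> N (\<theta> \<omega>)" using z xu K_def by auto
    have ne2: "N (\<theta> (\<theta> \<omega>)) \<noteq> {}" using nd unfolding deg_def using interior_subset by blast
    have ne1: "dseq ` {l. dseq l \<notin> N (\<theta> \<omega>)} \<noteq> {}" using nd unfolding deg_def by blast
    have nn: "0 \<le> infdist (\<phi> (\<theta> \<omega>) u) (A2 \<omega>)" "0 \<le> infdist u (C1 \<omega>)" "0 \<le> dist (\<phi> \<omega> x) u"
      by (simp_all add: infdist_nonneg)
    show "\<Phi> \<omega> z > 0"
    proof (rule ccontr)
      assume "\<not> \<Phi> \<omega> z > 0"
      then have le: "dist (\<phi> \<omega> x) u + infdist (\<phi> (\<theta> \<omega>) u) (A2 \<omega>) + infdist u (C1 \<omega>) \<le> 0"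
        unfolding \<Phi>_def xu by simp
      have z1: "dist (\<phi> \<omega> x) u = 0" using le nn by linarith
      have z2: "infdist (\<phi> (\<theta> \<omega>) u) (A2 \<omega>) = 0" using le nn by linarith
      have z3: "infdist u (C1 \<omega>) = 0" using le nn by linarith
      have a2: "\<phi> (\<theta> \<omega>) u \<in> N (\<theta> (\<theta> \<omega>))"
        using z2 A2eq[OF w] in_closed_iff_infdist_zero[OF closedN[OF thsp[OF w1]] ne2] by simp
      have "u \<in> closure (C1 \<omega>)"
        using z3 in_closure_iff_infdist_zero[of "C1 \<omega>"] ne1 unfolding C1_def by blast
      then have a3: "u \<notin> interior (N (\<theta> \<omega>))"
        using compl_rep[OF closedN[OF w1]] unfolding C1_def by auto
      have ue: "u = \<phi> \<omega> x" using z1 by simp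
      show False using BLKphi[OF w x] u a2 a3 ue by blast
    qed
  qed
  then obtain \<tau> where \<tau>m: "\<tau> \<in> borel_measurable M"
    and \<tau>: "\<forall>\<omega>\<in>space M. \<tau> \<omega> > 0 \<and> (\<not> deg \<omega> \<longrightarrow> (\<forall>z\<in>K \<omega>. \<tau> \<omega> \<le> \<Phi> \<omega> z))"
    by blast
  show ?thesis
  proof (intro bexI[OF _ \<tau>m] ballI conjI allI impI)
    fix \<omega> assume w: "\<omega> \<in> space M"
    show "\<tau> \<omega> > 0" using \<tau> w by blast
    have w1: "\<theta> \<omega> \<in> space M" using thsp[OF w] .
    have w2: "\<theta> (\<theta> \<omega>) \<in> space M" using thsp[OF w1] .
    fix g0 g1 v
    assume cl: "(\<forall>x\<in>N \<omega>. dist (\<phi> \<omega> x) (g0 x) < \<tau> \<omega> / 2) \<and> (\<forall>x\<in>N (\<theta> \<omega>). dist (\<phi> (\<theta> \<omega>) x) (g1 x) < \<tau> \<omega> / 2)"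
      and v: "v \<in> N \<omega>" and a: "g0 v \<in> N (\<theta> \<omega>) \<and> g1 (g0 v) \<in> N (\<theta> (\<theta> \<omega>))"
    show "g0 v \<in> interior (N (\<theta> \<omega>))"
    proof (rule ccontr)
      assume ni: "g0 v \<notin> interior (N (\<theta> \<omega>))"
      have "\<exists>k. dseq k \<in> interior (N (\<theta> (\<theta> \<omega>)))"
        using regular_nonempty[OF closedN[OF w2] regN'[OF w2]] a by blast
      moreover have "\<exists>l. dseq l \<notin> N (\<theta> \<omega>)" using compl_nonempty[OF closedN[OF w1] ni] .
      ultimately have nd: "\<not> deg \<omega>" unfolding deg_def by blast
      have zK: "(v, g0 v) \<in> K \<omega>" using a v unfolding K_def by auto
      have t: "\<not> deg \<omega> \<longrightarrow> (\<forall>z\<in>K \<omega>. \<tau> \<omega> \<le> \<Phi> \<omega> z)" using bspec[OF \<tau> w] by (rule conjunct2)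
      then have ge: "\<tau> \<omega> \<le> \<Phi> \<omega> (v, g0 v)" using nd zK by blast
      have e1: "dist (\<phi> \<omega> v) (g0 v) < \<tau> \<omega> / 2" using cl v by blast
      have "infdist (\<phi> (\<theta> \<omega>) (g0 v)) (A2 \<omega>) \<le> dist (\<phi> (\<theta> \<omega>) (g0 v)) (g1 (g0 v))"
        unfolding A2eq[OF w] using a by (intro infdist_le) blast
      also have "\<dots> < \<tau> \<omega> / 2" using cl a by blast
      finally have e2: "infdist (\<phi> (\<theta> \<omega>) (g0 v)) (A2 \<omega>) < \<tau> \<omega> / 2" .
      have e3: "infdist (g0 v) (C1 \<omega>) = 0" unfolding C1eq[OF w] using ni by simp
      have "\<Phi> \<omega> (v, g0 v) < \<tau> \<omega>" unfolding \<Phi>_def using e1 e2 e3 by simp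
      then show False using ge by simp
    qed
  qed
qed


lemma tau2:
  "\<exists>\<tau>\<in>borel_measurable M. \<forall>\<omega>\<in>space M. \<tau> \<omega> > 0 \<and> (\<forall>g0 g1. (\<forall>x\<in>N \<omega>. dist (\<phi> \<omega> x) (g0 x) < \<tau> \<omega> / 2)
      \<and> (\<forall>x\<in>N (\<theta> \<omega>). dist (\<phi> (\<theta> \<omega>) x) (g1 x) < \<tau> \<omega> / 2)
      \<longrightarrow> (\<forall>v\<in>L \<omega>. \<not> (g0 v \<in> N (\<theta> \<omega>) \<and> g1 (g0 v) \<in> N (\<theta> (\<theta> \<omega>)))))"
proof -
  define A2 where "A2 \<omega> = (dseq ` {k. dseq k \<in> interior (N (\<theta> (\<theta> \<omega>)))} :: 'x set)" for \<omega>
  define \<Phi> where "\<Phi> \<omega> p = dist (\<phi> \<omega> (fst p)) (snd p) + infdist (\<phi> (\<theta> \<omega>) (snd p)) (A2 \<omega>)"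
    for \<omega> and p :: "'x \<times> 'x"
  define hz where "hz t = ((dseq (fst t), dseq (snd t)) :: 'x \<times> 'x)" for t :: "nat \<times> nat"
  define deg where "deg \<omega> = (\<forall>k. dseq k \<notin> interior (N (\<theta> (\<theta> \<omega>))))" for \<omega>
  define Q where "Q t \<omega> = (dseq (fst t) \<in> interior (L \<omega>) \<and> dseq (snd t) \<in> interior (N (\<theta> \<omega>)))"
    for t :: "nat \<times> nat" and \<omega>
  define K where "K \<omega> = L \<omega> \<times> N (\<theta> \<omega>)" for \<omega>
  have A2eq: "infdist y (A2 \<omega>) = infdist y (N (\<theta> (\<theta> \<omega>)))" if "\<omega> \<in> space M" for y \<omega>
    unfolding A2_def using infdist_regular[OF closedN regN'] thsp2[OF that] by blast
  have "\<exists>\<tau>\<in>borel_measurable M. \<forall>\<omega>\<in>space M. \<tau> \<omega> > 0 \<and> (\<not> deg \<omega> \<longrightarrow> (\<forall>z\<in>K \<omega>. \<tau> \<omega> \<le> \<Phi> \<omega> z))"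
  proof (rule threshold2[of \<Phi> hz M Q deg K])
    fix t :: "nat \<times> nat"
    have [measurable]: "(\<lambda>\<omega>. infdist (\<phi> (\<theta> \<omega>) (dseq (snd t))) (A2 \<omega>)) \<in> borel_measurable M"
      unfolding A2_def by (rule meas_infdist_rep) measurable
    show "(\<lambda>\<omega>. \<Phi> \<omega> (hz t)) \<in> borel_measurable M"
      unfolding \<Phi>_def hz_def fst_conv snd_conv by measurable
    show "Measurable.pred M (Q t)" unfolding Q_def by measurable
  next
    show "Measurable.pred M deg" unfolding deg_def by measurable
  next
    fix \<omega> assume w: "\<omega> \<in> space M" and nd: "\<not> deg \<omega>"
    have w1: "\<theta> \<omega> \<in> space M" using thsp[OF w] .
    show "closure (hz ` {t. Q t \<omega>}) = K \<omega>"
    proof -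
      have "hz ` {t. Q t \<omega>} = dseq ` {i. dseq i \<in> interior (L \<omega>)} \<times> dseq ` {j. dseq j \<in> interior (N (\<theta> \<omega>))}"
        unfolding hz_def Q_def by (rule img2)
      then show ?thesis unfolding K_def
        using regular_rep[OF closedL[OF w] regL'[OF w]] regular_rep[OF closedN[OF w1] regN'[OF w1]]
        by (simp add: closure_Times)
    qed
    show "compact (K \<omega>)" unfolding K_def using compactL[OF w] compactN[OF w1] by (simp add: compact_Times)
    show "continuous_on (K \<omega>) (\<Phi> \<omega>)" unfolding \<Phi>_def
      by (intro continuous_intros phi_cont_on[OF w] phi_cont_on[OF w1])
    fix z assume z: "z \<in> K \<omega>"
    obtain x u where xu: "z = (x, u)" by (cases z) auto
    have x: "x \<in> L \<omega>" and u: "u \<in> N (\<theta> \<omega>)" using z xu K_def by auto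
    have ne2: "N (\<theta> (\<theta> \<omega>)) \<noteq> {}" using nd unfolding deg_def using interior_subset by blast
    have nn: "0 \<le> infdist (\<phi> (\<theta> \<omega>) u) (A2 \<omega>)" "0 \<le> dist (\<phi> \<omega> x) u"
      by (simp_all add: infdist_nonneg)
    show "\<Phi> \<omega> z > 0"
    proof (rule ccontr)
      assume "\<not> \<Phi> \<omega> z > 0"
      then have le: "dist (\<phi> \<omega> x) u + infdist (\<phi> (\<theta> \<omega>) u) (A2 \<omega>) \<le> 0"
        unfolding \<Phi>_def xu by simp
      have z1: "dist (\<phi> \<omega> x) u = 0" using le nn by linarith
      have z2: "infdist (\<phi> (\<theta> \<omega>) u) (A2 \<omega>) = 0" using le nn by linarith
      have a2: "\<phi> (\<theta> \<omega>) u \<in> N (\<theta> (\<theta> \<omega>))"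
        using z2 A2eq[OF w] in_closed_iff_infdist_zero[OF closedN[OF thsp[OF w1]] ne2] by simp
      have ue: "u = \<phi> \<omega> x" using z1 by simp
      show False using AVOIDphi[OF w x] u a2 ue by blast
    qed
  qed
  then obtain \<tau> where \<tau>m: "\<tau> \<in> borel_measurable M"
    and \<tau>: "\<forall>\<omega>\<in>space M. \<tau> \<omega> > 0 \<and> (\<not> deg \<omega> \<longrightarrow> (\<forall>z\<in>K \<omega>. \<tau> \<omega> \<le> \<Phi> \<omega> z))"
    by blast
  show ?thesis
  proof (intro bexI[OF _ \<tau>m] ballI conjI allI impI notI)
    fix \<omega> assume w: "\<omega> \<in> space M"
    show "\<tau> \<omega> > 0" using \<tau> w by blast
    have w1: "\<theta> \<omega> \<in> space M" using thsp[OF w] .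
    have w2: "\<theta> (\<theta> \<omega>) \<in> space M" using thsp[OF w1] .
    fix g0 g1 v
    assume cl: "(\<forall>x\<in>N \<omega>. dist (\<phi> \<omega> x) (g0 x) < \<tau> \<omega> / 2) \<and> (\<forall>x\<in>N (\<theta> \<omega>). dist (\<phi> (\<theta> \<omega>) x) (g1 x) < \<tau> \<omega> / 2)"
      and v: "v \<in> L \<omega>" and a: "g0 v \<in> N (\<theta> \<omega>) \<and> g1 (g0 v) \<in> N (\<theta> (\<theta> \<omega>))"
    have vN: "v \<in> N \<omega>" using subL[OF w] v by blast
    have "\<exists>k. dseq k \<in> interior (N (\<theta> (\<theta> \<omega>)))"
      using regular_nonempty[OF closedN[OF w2] regN'[OF w2]] a by blast
    then have nd: "\<not> deg \<omega>" unfolding deg_def by blast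
    have zK: "(v, g0 v) \<in> K \<omega>" using a v unfolding K_def by auto
    have t: "\<not> deg \<omega> \<longrightarrow> (\<forall>z\<in>K \<omega>. \<tau> \<omega> \<le> \<Phi> \<omega> z)" using bspec[OF \<tau> w] by (rule conjunct2)
    then have ge: "\<tau> \<omega> \<le> \<Phi> \<omega> (v, g0 v)" using nd zK by blast
    have e1: "dist (\<phi> \<omega> v) (g0 v) < \<tau> \<omega> / 2" using cl vN by blast
    have "infdist (\<phi> (\<theta> \<omega>) (g0 v)) (A2 \<omega>) \<le> dist (\<phi> (\<theta> \<omega>) (g0 v)) (g1 (g0 v))"
      unfolding A2eq[OF w] using a by (intro infdist_le) blast
    also have "\<dots> < \<tau> \<omega> / 2" using cl a by blast
    finally have e2: "infdist (\<phi> (\<theta> \<omega>) (g0 v)) (A2 \<omega>) < \<tau> \<omega> / 2" .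
    have "\<Phi> \<omega> (v, g0 v) < \<tau> \<omega>" unfolding \<Phi>_def using e1 e2 by simp
    then show False using ge by simp
  qed
qed

lemma tau3:
  "\<exists>\<tau>\<in>borel_measurable M. \<forall>\<omega>\<in>space M. \<tau> \<omega> > 0 \<and> (\<forall>g0. (\<forall>x\<in>N \<omega>. dist (\<phi> \<omega> x) (g0 x) < \<tau> \<omega>)
      \<longrightarrow> (\<forall>v\<in>closure (N \<omega> - L \<omega>). g0 v \<in> interior (N (\<theta> \<omega>))))"
proof -
  define C1 where "C1 \<omega> = (dseq ` {l. dseq l \<notin> N (\<theta> \<omega>)} :: 'x set)" for \<omega>
  define \<Phi> where "\<Phi> \<omega> p = infdist (\<phi> \<omega> p) (C1 \<omega>)" for \<omega> and p :: 'x
  define hz where "hz t = (dseq t :: 'x)" for t :: nat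
  define deg where "deg \<omega> = (\<forall>l. dseq l \<in> N (\<theta> \<omega>))" for \<omega>
  define Q where "Q t \<omega> = (dseq t \<in> interior (N \<omega>) \<and> dseq t \<notin> L \<omega>)" for t :: nat and \<omega>
  define K where "K \<omega> = closure (N \<omega> - L \<omega>)" for \<omega>
  have C1eq: "infdist y (C1 \<omega>) = infdist y (- interior (N (\<theta> \<omega>)))" if "\<omega> \<in> space M" for y \<omega>
    unfolding C1_def using infdist_compl[OF closedN] thsp[OF that] by blast
  have "\<exists>\<tau>\<in>borel_measurable M. \<forall>\<omega>\<in>space M. \<tau> \<omega> > 0 \<and> (\<not> deg \<omega> \<longrightarrow> (\<forall>z\<in>K \<omega>. \<tau> \<omega> \<le> \<Phi> \<omega> z))"
  proof (rule threshold2[of \<Phi> hz M Q deg K])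
    fix t :: nat
    show "(\<lambda>\<omega>. \<Phi> \<omega> (hz t)) \<in> borel_measurable M"
      unfolding \<Phi>_def hz_def C1_def by (rule meas_infdist_rep) measurable
    show "Measurable.pred M (Q t)" unfolding Q_def by measurable
  next
    show "Measurable.pred M deg" unfolding deg_def by measurable
  next
    fix \<omega> assume w: "\<omega> \<in> space M" and nd: "\<not> deg \<omega>"
    have w1: "\<theta> \<omega> \<in> space M" using thsp[OF w] .
    show "closure (hz ` {t. Q t \<omega>}) = K \<omega>"
    proof -
      have "{j. dseq j \<in> interior (N \<omega>) \<and> dseq j \<notin> L \<omega>} = {j. dseq j \<in> interior (N \<omega>) \<inter> - L \<omega>}" by auto
      then show ?thesis unfolding K_def hz_def Q_def
        using diff_rep[OF closedL[OF w] regN'[OF w]] by simp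
    qed
    show "compact (K \<omega>)" unfolding K_def using rcK w unfolding random_compact_def by blast
    show "continuous_on (K \<omega>) (\<Phi> \<omega>)" unfolding \<Phi>_def
      by (intro continuous_intros phi_cont_on[OF w])
    fix z assume z: "z \<in> K \<omega>"
    have ne1: "dseq ` {l. dseq l \<notin> N (\<theta> \<omega>)} \<noteq> {}" using nd unfolding deg_def by blast
    show "\<Phi> \<omega> z > 0"
    proof (rule ccontr)
      assume "\<not> \<Phi> \<omega> z > 0"
      then have z3: "infdist (\<phi> \<omega> z) (C1 \<omega>) = 0" unfolding \<Phi>_def using infdist_nonneg
        by (metis order.antisym not_less)
      have "\<phi> \<omega> z \<in> closure (C1 \<omega>)"
        using z3 in_closure_iff_infdist_zero[of "C1 \<omega>"] ne1 unfolding C1_def by blast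
      then have a3: "\<phi> \<omega> z \<notin> interior (N (\<theta> \<omega>))"
        using compl_rep[OF closedN[OF w1]] unfolding C1_def by auto
      show False using EXITINphi[OF w] z a3 unfolding K_def by blast
    qed
  qed
  then obtain \<tau> where \<tau>m: "\<tau> \<in> borel_measurable M"
    and \<tau>: "\<forall>\<omega>\<in>space M. \<tau> \<omega> > 0 \<and> (\<not> deg \<omega> \<longrightarrow> (\<forall>z\<in>K \<omega>. \<tau> \<omega> \<le> \<Phi> \<omega> z))"
    by blast
  show ?thesis
  proof (intro bexI[OF _ \<tau>m] ballI conjI allI impI)
    fix \<omega> assume w: "\<omega> \<in> space M"
    show "\<tau> \<omega> > 0" using \<tau> w by blast
    have w1: "\<theta> \<omega> \<in> space M" using thsp[OF w] .
    fix g0 v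
    assume cl: "\<forall>x\<in>N \<omega>. dist (\<phi> \<omega> x) (g0 x) < \<tau> \<omega>" and v: "v \<in> closure (N \<omega> - L \<omega>)"
    have vN: "v \<in> N \<omega>" using clK_sub[OF w] v by blast
    show "g0 v \<in> interior (N (\<theta> \<omega>))"
    proof (rule ccontr)
      assume ni: "g0 v \<notin> interior (N (\<theta> \<omega>))"
      have "\<exists>l. dseq l \<notin> N (\<theta> \<omega>)" using compl_nonempty[OF closedN[OF w1] ni] .
      then have nd: "\<not> deg \<omega>" unfolding deg_def by blast
      have zK: "v \<in> K \<omega>" using v unfolding K_def by auto
      have t: "\<not> deg \<omega> \<longrightarrow> (\<forall>z\<in>K \<omega>. \<tau> \<omega> \<le> \<Phi> \<omega> z)" using bspec[OF \<tau> w] by (rule conjunct2)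
      then have ge: "\<tau> \<omega> \<le> \<Phi> \<omega> v" using nd zK by blast
      have "\<Phi> \<omega> v \<le> dist (\<phi> \<omega> v) (g0 v)"
        unfolding \<Phi>_def C1eq[OF w] using ni by (intro infdist_le) blast
      also have "\<dots> < \<tau> \<omega>" using cl vN by blast
      finally show False using ge by simp
    qed
  qed
qed

lemma tau4:
  "\<exists>\<tau>\<in>borel_measurable M. \<forall>\<omega>\<in>space M. \<tau> \<omega> > 0 \<and> (\<forall>g0. (\<forall>x\<in>N \<omega>. dist (\<phi> \<omega> x) (g0 x) < \<tau> \<omega>)
      \<longrightarrow> (\<forall>v\<in>L \<omega>. g0 v \<notin> closure (N (\<theta> \<omega>) - L (\<theta> \<omega>))))"
proof -
  define \<Phi> where "\<Phi> \<omega> p = dist (\<phi> \<omega> (fst p)) (snd p)" for \<omega> and p :: "'x \<times> 'x"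
  define hz where "hz t = ((dseq (fst t), dseq (snd t)) :: 'x \<times> 'x)" for t :: "nat \<times> nat"
  define deg where "deg \<omega> = False" for \<omega> :: 'w
  define Q where "Q t \<omega> = (dseq (fst t) \<in> interior (L \<omega>) \<and> (dseq (snd t) \<in> interior (N (\<theta> \<omega>)) \<and> dseq (snd t) \<notin> L (\<theta> \<omega>)))"
    for t :: "nat \<times> nat" and \<omega>
  define K where "K \<omega> = L \<omega> \<times> closure (N (\<theta> \<omega>) - L (\<theta> \<omega>))" for \<omega>
  have "\<exists>\<tau>\<in>borel_measurable M. \<forall>\<omega>\<in>space M. \<tau> \<omega> > 0 \<and> (\<not> deg \<omega> \<longrightarrow> (\<forall>z\<in>K \<omega>. \<tau> \<omega> \<le> \<Phi> \<omega> z))"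
  proof (rule threshold2[of \<Phi> hz M Q deg K])
    fix t :: "nat \<times> nat"
    show "(\<lambda>\<omega>. \<Phi> \<omega> (hz t)) \<in> borel_measurable M"
      unfolding \<Phi>_def hz_def fst_conv snd_conv by measurable
    show "Measurable.pred M (Q t)" unfolding Q_def by measurable
  next
    show "Measurable.pred M deg" unfolding deg_def by measurable
  next
    fix \<omega> assume w: "\<omega> \<in> space M"
    have w1: "\<theta> \<omega> \<in> space M" using thsp[OF w] .
    show "closure (hz ` {t. Q t \<omega>}) = K \<omega>"
    proof -
      have ei: "hz ` {t. Q t \<omega>} = dseq ` {i. dseq i \<in> interior (L \<omega>)} \<times>
            dseq ` {j. dseq j \<in> interior (N (\<theta> \<omega>)) \<and> dseq j \<notin> L (\<theta> \<omega>)}"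
        unfolding hz_def Q_def by (rule img2)
      have se: "{j. dseq j \<in> interior (N (\<theta> \<omega>)) \<and> dseq j \<notin> L (\<theta> \<omega>)} = {j. dseq j \<in> interior (N (\<theta> \<omega>)) \<inter> - L (\<theta> \<omega>)}"
        by auto
      have eA: "closure (dseq ` {i. dseq i \<in> interior (L \<omega>)}) = L \<omega>"
        using regular_rep[OF closedL[OF w] regL'[OF w]] by (rule sym)
      have eB: "closure (dseq ` {j. dseq j \<in> interior (N (\<theta> \<omega>)) \<and> dseq j \<notin> L (\<theta> \<omega>)}) = closure (N (\<theta> \<omega>) - L (\<theta> \<omega>))"
        unfolding se using diff_rep[OF closedL[OF w1] regN'[OF w1]] by (rule sym)
      show ?thesis unfolding K_def ei closure_Times eA eB ..
    qed
    have "compact (closure (N (\<theta> \<omega>) - L (\<theta> \<omega>)))" using rcK w1 unfolding random_compact_def by blast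
    then show "compact (K \<omega>)" unfolding K_def using compactL[OF w] by (simp add: compact_Times)
    show "continuous_on (K \<omega>) (\<Phi> \<omega>)" unfolding \<Phi>_def
      by (intro continuous_intros phi_cont_on[OF w])
    fix z assume z: "z \<in> K \<omega>"
    obtain x u where xu: "z = (x, u)" by (cases z) auto
    have x: "x \<in> L \<omega>" and u: "u \<in> closure (N (\<theta> \<omega>) - L (\<theta> \<omega>))" using z xu K_def by auto
    show "\<Phi> \<omega> z > 0"
    proof (rule ccontr)
      assume "\<not> \<Phi> \<omega> z > 0"
      then have "\<phi> \<omega> x = u" unfolding \<Phi>_def xu by simp
      then show False using SEPphi[OF w x] u by simp
    qed
  qed
  then obtain \<tau> where \<tau>m: "\<tau> \<in> borel_measurable M"
    and \<tau>: "\<forall>\<omega>\<in>space M. \<tau> \<omega> > 0 \<and> (\<not> deg \<omega> \<longrightarrow> (\<forall>z\<in>K \<omega>. \<tau> \<omega> \<le> \<Phi> \<omega> z))"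
    by blast
  show ?thesis
  proof (intro bexI[OF _ \<tau>m] ballI conjI allI impI notI)
    fix \<omega> assume w: "\<omega> \<in> space M"
    show "\<tau> \<omega> > 0" using \<tau> w by blast
    fix g0 v
    assume cl: "\<forall>x\<in>N \<omega>. dist (\<phi> \<omega> x) (g0 x) < \<tau> \<omega>" and v: "v \<in> L \<omega>"
      and u: "g0 v \<in> closure (N (\<theta> \<omega>) - L (\<theta> \<omega>))"
    have vN: "v \<in> N \<omega>" using subL[OF w] v by blast
    have zK: "(v, g0 v) \<in> K \<omega>" using v u unfolding K_def by auto
    have t: "\<not> deg \<omega> \<longrightarrow> (\<forall>z\<in>K \<omega>. \<tau> \<omega> \<le> \<Phi> \<omega> z)" using bspec[OF \<tau> w] by (rule conjunct2)
    then have ge: "\<tau> \<omega> \<le> \<Phi> \<omega> (v, g0 v)" using zK unfolding deg_def by blast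
    have "\<Phi> \<omega> (v, g0 v) < \<tau> \<omega>" unfolding \<Phi>_def using cl vN by simp
    then show False using ge by simp
  qed
qed


lemma psi_part:
  "\<exists>\<delta>. \<delta> \<in> borel_measurable M \<and> (\<forall>\<omega>\<in>space M. \<delta> \<omega> > 0) \<and>
     (\<forall>\<psi>. random_homeo M \<psi> \<and> (\<forall>\<omega>\<in>space M. dN M \<theta> N \<phi> \<psi> \<omega> < \<delta> \<omega>)
        \<longrightarrow> random_isol_inv_set M \<theta> \<psi> (Inv M \<theta> \<psi> (\<lambda>\<omega>. N \<omega> - L \<omega>))
          \<and> filtration_pair M \<theta> \<psi> N L (Inv M \<theta> \<psi> (\<lambda>\<omega>. N \<omega> - L \<omega>)))"
proof -
  obtain \<tau>1 where m1: "\<tau>1 \<in> borel_measurable M" and t1: "\<forall>\<omega>\<in>space M. \<tau>1 \<omega> > 0 \<and> (\<forall>g0 g1. (\<forall>x\<in>N \<omega>. dist (\<phi> \<omega> x) (g0 x) < \<tau>1 \<omega> / 2)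
      \<and> (\<forall>x\<in>N (\<theta> \<omega>). dist (\<phi> (\<theta> \<omega>) x) (g1 x) < \<tau>1 \<omega> / 2)
      \<longrightarrow> (\<forall>v\<in>N \<omega>. g0 v \<in> N (\<theta> \<omega>) \<and> g1 (g0 v) \<in> N (\<theta> (\<theta> \<omega>)) \<longrightarrow> g0 v \<in> interior (N (\<theta> \<omega>))))"
    using tau1 by blast
  obtain \<tau>2 where m2: "\<tau>2 \<in> borel_measurable M" and t2: "\<forall>\<omega>\<in>space M. \<tau>2 \<omega> > 0 \<and> (\<forall>g0 g1. (\<forall>x\<in>N \<omega>. dist (\<phi> \<omega> x) (g0 x) < \<tau>2 \<omega> / 2)
      \<and> (\<forall>x\<in>N (\<theta> \<omega>). dist (\<phi> (\<theta> \<omega>) x) (g1 x) < \<tau>2 \<omega> / 2)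
      \<longrightarrow> (\<forall>v\<in>L \<omega>. \<not> (g0 v \<in> N (\<theta> \<omega>) \<and> g1 (g0 v) \<in> N (\<theta> (\<theta> \<omega>)))))"
    using tau2 by blast
  obtain \<tau>3 where m3: "\<tau>3 \<in> borel_measurable M" and t3: "\<forall>\<omega>\<in>space M. \<tau>3 \<omega> > 0 \<and> (\<forall>g0. (\<forall>x\<in>N \<omega>. dist (\<phi> \<omega> x) (g0 x) < \<tau>3 \<omega>)
      \<longrightarrow> (\<forall>v\<in>closure (N \<omega> - L \<omega>). g0 v \<in> interior (N (\<theta> \<omega>))))"
    using tau3 by blast
  obtain \<tau>4 where m4: "\<tau>4 \<in> borel_measurable M" and t4: "\<forall>\<omega>\<in>space M. \<tau>4 \<omega> > 0 \<and> (\<forall>g0. (\<forall>x\<in>N \<omega>. dist (\<phi> \<omega> x) (g0 x) < \<tau>4 \<omega>)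
      \<longrightarrow> (\<forall>v\<in>L \<omega>. g0 v \<notin> closure (N (\<theta> \<omega>) - L (\<theta> \<omega>))))"
    using tau4 by blast
  define \<tau> where "\<tau> \<omega> = min (min (\<tau>1 \<omega> / 2) (\<tau>2 \<omega> / 2)) (min (\<tau>3 \<omega>) (\<tau>4 \<omega>))" for \<omega>
  define \<theta>' where "\<theta>' = inv_into (space M) \<theta>"
  have m\<theta>'[measurable]: "\<theta>' \<in> M \<rightarrow>\<^sub>M M" unfolding \<theta>'_def using mds_facts(3)[OF mds] .
  have [measurable]: "\<tau>1 \<in> borel_measurable M" "\<tau>2 \<in> borel_measurable M" "\<tau>3 \<in> borel_measurable M"
    "\<tau>4 \<in> borel_measurable M" using m1 m2 m3 m4 by auto
  have m\<tau>[measurable]: "\<tau> \<in> borel_measurable M" unfolding \<tau>_def by measurable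
  define \<delta> where "\<delta> \<omega> = min (\<tau> (\<theta>' \<omega>)) (\<tau> (\<theta>' (\<theta>' \<omega>)))" for \<omega>
  have m\<delta>: "\<delta> \<in> borel_measurable M"
  proof -
    have a: "(\<lambda>\<omega>. \<tau> (\<theta>' \<omega>)) \<in> borel_measurable M" using measurable_compose[OF m\<theta>' m\<tau>] by (simp add: comp_def)
    have b: "(\<lambda>\<omega>. \<tau> (\<theta>' (\<theta>' \<omega>))) \<in> borel_measurable M" using measurable_compose[OF m\<theta>' a] by (simp add: comp_def)
    show ?thesis unfolding \<delta>_def using a b by measurable
  qed
  have t'sp: "\<theta>' \<omega> \<in> space M" if "\<omega> \<in> space M" for \<omega> unfolding \<theta>'_def using mds_facts(5)[OF mds that] .
  have t't: "\<theta>' (\<theta> \<omega>) = \<omega>" if "\<omega> \<in> space M" for \<omega> unfolding \<theta>'_def using mds_facts(6)[OF mds that] .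
  have \<tau>pos: "\<tau> \<omega> > 0" if "\<omega> \<in> space M" for \<omega>
    using t1 t2 t3 t4 that unfolding \<tau>_def by auto
  have \<delta>pos: "\<forall>\<omega>\<in>space M. \<delta> \<omega> > 0" unfolding \<delta>_def using \<tau>pos t'sp by auto
  show ?thesis
  proof (intro exI[of _ \<delta>] conjI m\<delta> \<delta>pos allI impI)
    fix \<psi> assume a: "random_homeo M \<psi> \<and> (\<forall>\<omega>\<in>space M. dN M \<theta> N \<phi> \<psi> \<omega> < \<delta> \<omega>)"
    have h\<psi>: "homeos M \<psi>" using a unfolding random_homeo_def homeos_def by blast
    have close0: "dist (\<phi> \<omega> x) (\<psi> \<omega> x) < \<tau> \<omega>" if w: "\<omega> \<in> space M" and x: "x \<in> N \<omega>" for \<omega> x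
    proof -
      have w1: "\<theta> \<omega> \<in> space M" using thsp[OF w] .
      have e: "\<theta>' (\<theta> \<omega>) = \<omega>" using t't[OF w] .
      have "dist (\<phi> \<omega> x) (\<psi> \<omega> x) \<le> dN M \<theta> N \<phi> \<psi> (\<theta> \<omega>)"
        using dN_le[OF h\<psi> w1, of x] x e unfolding \<theta>'_def by simp
      also have "\<dots> < \<delta> (\<theta> \<omega>)" using a w1 by blast
      also have "\<dots> \<le> \<tau> \<omega>" unfolding \<delta>_def e by simp
      finally show ?thesis .
    qed
    have close1: "dist (\<phi> (\<theta> \<omega>) x) (\<psi> (\<theta> \<omega>) x) < \<tau> \<omega>" if w: "\<omega> \<in> space M" and x: "x \<in> N (\<theta> \<omega>)" for \<omega> x
    proof -
      have w1: "\<theta> \<omega> \<in> space M" using thsp[OF w] .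
      have w2: "\<theta> (\<theta> \<omega>) \<in> space M" using thsp[OF w1] .
      have e: "\<theta>' (\<theta> (\<theta> \<omega>)) = \<theta> \<omega>" using t't[OF w1] .
      have "dist (\<phi> (\<theta> \<omega>) x) (\<psi> (\<theta> \<omega>) x) \<le> dN M \<theta> N \<phi> \<psi> (\<theta> (\<theta> \<omega>))"
        using dN_le[OF h\<psi> w2, of x] x e unfolding \<theta>'_def by simp
      also have "\<dots> < \<delta> (\<theta> (\<theta> \<omega>))" using a w2 by blast
      also have "\<dots> \<le> \<tau> \<omega>" unfolding \<delta>_def e t't[OF w] by simp
      finally show ?thesis .
    qed
    have le\<tau>: "\<tau> \<omega> \<le> \<tau>1 \<omega> / 2" "\<tau> \<omega> \<le> \<tau>2 \<omega> / 2" "\<tau> \<omega> \<le> \<tau>3 \<omega>" "\<tau> \<omega> \<le> \<tau>4 \<omega>" for \<omega>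
      unfolding \<tau>_def by auto
    have BLK: "\<forall>\<omega>\<in>space M. \<forall>w\<in>N \<omega>. \<psi> \<omega> w \<in> N (\<theta> \<omega>) \<and> \<psi> (\<theta> \<omega>) (\<psi> \<omega> w) \<in> N (\<theta> (\<theta> \<omega>))
                  \<longrightarrow> \<psi> \<omega> w \<in> interior (N (\<theta> \<omega>))"
    proof (rule ballI)
      fix \<omega> assume w: "\<omega> \<in> space M"
      have c0: "\<forall>x\<in>N \<omega>. dist (\<phi> \<omega> x) (\<psi> \<omega> x) < \<tau>1 \<omega> / 2" using close0[OF w] le\<tau>(1)[of \<omega>] by fastforce
      have c1: "\<forall>x\<in>N (\<theta> \<omega>). dist (\<phi> (\<theta> \<omega>) x) (\<psi> (\<theta> \<omega>) x) < \<tau>1 \<omega> / 2" using close1[OF w] le\<tau>(1)[of \<omega>] by fastforce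
      show "\<forall>w\<in>N \<omega>. \<psi> \<omega> w \<in> N (\<theta> \<omega>) \<and> \<psi> (\<theta> \<omega>) (\<psi> \<omega> w) \<in> N (\<theta> (\<theta> \<omega>)) \<longrightarrow> \<psi> \<omega> w \<in> interior (N (\<theta> \<omega>))"
        using bspec[OF t1 w] c0 c1 by blast
    qed
    have AVOID: "\<forall>\<omega>\<in>space M. \<forall>x\<in>L \<omega>. \<not> (\<psi> \<omega> x \<in> N (\<theta> \<omega>) \<and> \<psi> (\<theta> \<omega>) (\<psi> \<omega> x) \<in> N (\<theta> (\<theta> \<omega>)))"
    proof (rule ballI)
      fix \<omega> assume w: "\<omega> \<in> space M"
      have c0: "\<forall>x\<in>N \<omega>. dist (\<phi> \<omega> x) (\<psi> \<omega> x) < \<tau>2 \<omega> / 2" using close0[OF w] le\<tau>(2)[of \<omega>] by fastforce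
      have c1: "\<forall>x\<in>N (\<theta> \<omega>). dist (\<phi> (\<theta> \<omega>) x) (\<psi> (\<theta> \<omega>) x) < \<tau>2 \<omega> / 2" using close1[OF w] le\<tau>(2)[of \<omega>] by fastforce
      show "\<forall>x\<in>L \<omega>. \<not> (\<psi> \<omega> x \<in> N (\<theta> \<omega>) \<and> \<psi> (\<theta> \<omega>) (\<psi> \<omega> x) \<in> N (\<theta> (\<theta> \<omega>)))"
        using bspec[OF t2 w] c0 c1 by blast
    qed
    have EXITIN: "\<forall>\<omega>\<in>space M. \<forall>x\<in>closure (N \<omega> - L \<omega>). \<psi> \<omega> x \<in> interior (N (\<theta> \<omega>))"
    proof (rule ballI)
      fix \<omega> assume w: "\<omega> \<in> space M"
      have c0: "\<forall>x\<in>N \<omega>. dist (\<phi> \<omega> x) (\<psi> \<omega> x) < \<tau>3 \<omega>" using close0[OF w] le\<tau>(3)[of \<omega>] by fastforce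
      show "\<forall>x\<in>closure (N \<omega> - L \<omega>). \<psi> \<omega> x \<in> interior (N (\<theta> \<omega>))"
        using bspec[OF t3 w] c0 by blast
    qed
    have SEP: "\<forall>\<omega>\<in>space M. \<psi> \<omega> ` L \<omega> \<inter> closure (N (\<theta> \<omega>) - L (\<theta> \<omega>)) = {}"
    proof (rule ballI)
      fix \<omega> assume w: "\<omega> \<in> space M"
      have c0: "\<forall>x\<in>N \<omega>. dist (\<phi> \<omega> x) (\<psi> \<omega> x) < \<tau>4 \<omega>" using close0[OF w] le\<tau>(4)[of \<omega>] by fastforce
      have "\<forall>v\<in>L \<omega>. \<psi> \<omega> v \<notin> closure (N (\<theta> \<omega>) - L (\<theta> \<omega>))" using bspec[OF t4 w] c0 by blast
      then show "\<psi> \<omega> ` L \<omega> \<inter> closure (N (\<theta> \<omega>) - L (\<theta> \<omega>)) = {}" by blast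
    qed
    have reg: "\<forall>\<omega>\<in>space M. N \<omega> = closure (interior (N \<omega>)) \<and> L \<omega> = closure (interior (L \<omega>))" using regN regL by blast
    have sub: "\<forall>\<omega>\<in>space M. L \<omega> \<subseteq> N \<omega>" using subL by blast
    note G = GFL[OF mds h\<psi> rcN rcL rcK reg sub BLK AVOID EXITIN SEP]
    have fp: "filtration_pair M \<theta> \<psi> N L (Inv M \<theta> \<psi> N)" by (rule G(1))
    have eq: "\<forall>\<omega>\<in>space M. Inv M \<theta> \<psi> (\<lambda>\<omega>. N \<omega> - L \<omega>) \<omega> = Inv M \<theta> \<psi> N \<omega>" by (rule G(2))
    have iso: "random_isol_nbhd M \<theta> \<psi> N" using fp unfolding filtration_pair_def by blast
    show "random_isol_inv_set M \<theta> \<psi> (Inv M \<theta> \<psi> (\<lambda>\<omega>. N \<omega> - L \<omega>))"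
      unfolding random_isol_inv_set_def using iso eq by blast
    show "filtration_pair M \<theta> \<psi> N L (Inv M \<theta> \<psi> (\<lambda>\<omega>. N \<omega> - L \<omega>))"
      using fp eq unfolding filtration_pair_def by simp
  qed
qed

end

end


theorem mainTheorem5:
  fixes M :: "'w measure" and \<theta> :: "'w \<Rightarrow> 'w"
    and \<phi> :: "'w \<Rightarrow> 'x::polish_space \<Rightarrow> 'x" and N :: "'w \<Rightarrow> 'x set"
  assumes "mds M \<theta>"
    and "locally_compact_space (euclidean :: 'x topology)"
    and "random_homeo M \<phi>"
    and "random_isol_block M \<theta> \<phi> N"
    and "\<forall>\<omega>\<in>space M. N \<omega> = closure (interior (N \<omega>))"
  shows "\<exists>\<epsilon>. \<epsilon> \<in> borel_measurable M \<and> (\<forall>\<omega>\<in>space M. \<epsilon> \<omega> > 0) \<and>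
    (\<forall>L. random_compact M L \<and> rel_nbhd M L (exit_set \<theta> \<phi> N) N
         \<and> (\<forall>\<omega>\<in>space M. L \<omega> = closure (interior (L \<omega>)))
         \<and> (\<forall>\<omega>\<in>space M. \<forall>x\<in>L \<omega>. \<exists>y\<in>exit_set \<theta> \<phi> N \<omega>. dist x y < \<epsilon> \<omega>)
       \<longrightarrow> filtration_pair M \<theta> \<phi> N L (Inv M \<theta> \<phi> N)
         \<and> (\<exists>\<delta>. \<delta> \<in> borel_measurable M \<and> (\<forall>\<omega>\<in>space M. \<delta> \<omega> > 0) \<and>
              (\<forall>\<psi>. random_homeo M \<psi> \<and> (\<forall>\<omega>\<in>space M. dN M \<theta> N \<phi> \<psi> \<omega> < \<delta> \<omega>)
                 \<longrightarrow> random_isol_inv_set M \<theta> \<psi> (Inv M \<theta> \<psi> (\<lambda>\<omega>. N \<omega> - L \<omega>))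
                   \<and> filtration_pair M \<theta> \<psi> N L (Inv M \<theta> \<psi> (\<lambda>\<omega>. N \<omega> - L \<omega>)))))"
proof -
  obtain \<epsilon> where \<epsilon>m: "\<epsilon> \<in> borel_measurable M" and \<epsilon>: "\<forall>\<omega>\<in>space M. \<epsilon> \<omega> > 0 \<and>
     (\<forall>z y. z \<in> N \<omega> \<and> \<phi> \<omega> z \<in> N (\<theta> \<omega>) \<and> \<phi> (\<theta> \<omega>) (\<phi> \<omega> z) \<in> N (\<theta> (\<theta> \<omega>)) \<and> y \<in> N \<omega>
        \<and> \<phi> \<omega> y \<notin> interior (N (\<theta> \<omega>)) \<longrightarrow> \<epsilon> \<omega> \<le> dist z y)"
    using eps_exists[OF assms(1) assms(3) assms(4) assms(5)] by blast
  have \<epsilon>good: "\<forall>\<omega>\<in>space M. \<forall>z y. z \<in> N \<omega> \<and> \<phi> \<omega> z \<in> N (\<theta> \<omega>) \<and> \<phi> (\<theta> \<omega>) (\<phi> \<omega> z) \<in> N (\<theta> (\<theta> \<omega>)) \<and> y \<in> N \<omega>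
        \<and> \<phi> \<omega> y \<notin> interior (N (\<theta> \<omega>)) \<longrightarrow> \<epsilon> \<omega> \<le> dist z y" using \<epsilon> by blast
  have \<epsilon>pos: "\<forall>\<omega>\<in>space M. \<epsilon> \<omega> > 0" using \<epsilon> by blast
  show ?thesis
  proof (rule exI[of _ \<epsilon>], intro conjI \<epsilon>m \<epsilon>pos allI impI)
    fix L assume H: "random_compact M L \<and> rel_nbhd M L (exit_set \<theta> \<phi> N) N
         \<and> (\<forall>\<omega>\<in>space M. L \<omega> = closure (interior (L \<omega>)))
         \<and> (\<forall>\<omega>\<in>space M. \<forall>x\<in>L \<omega>. \<exists>y\<in>exit_set \<theta> \<phi> N \<omega>. dist x y < \<epsilon> \<omega>)"
    have rcL: "random_compact M L" using H by blast
    have rel: "rel_nbhd M L (exit_set \<theta> \<phi> N) N" using H by blast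
    have regL: "\<forall>\<omega>\<in>space M. L \<omega> = closure (interior (L \<omega>))" using H by blast
    have near: "\<forall>\<omega>\<in>space M. \<forall>x\<in>L \<omega>. \<exists>y\<in>exit_set \<theta> \<phi> N \<omega>. dist x y < \<epsilon> \<omega>" using H by blast
    show "filtration_pair M \<theta> \<phi> N L (Inv M \<theta> \<phi> N)"
      by (rule filt_phi[OF assms(1) assms(3) assms(4) assms(5) \<epsilon>good rcL rel regL near])
    show "\<exists>\<delta>. \<delta> \<in> borel_measurable M \<and> (\<forall>\<omega>\<in>space M. \<delta> \<omega> > 0) \<and>
              (\<forall>\<psi>. random_homeo M \<psi> \<and> (\<forall>\<omega>\<in>space M. dN M \<theta> N \<phi> \<psi> \<omega> < \<delta> \<omega>)
                 \<longrightarrow> random_isol_inv_set M \<theta> \<psi> (Inv M \<theta> \<psi> (\<lambda>\<omega>. N \<omega> - L \<omega>))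
                   \<and> filtration_pair M \<theta> \<psi> N L (Inv M \<theta> \<psi> (\<lambda>\<omega>. N \<omega> - L \<omega>)))"
      by (rule psi_part[OF assms(1) assms(3) assms(4) assms(5) \<epsilon>good rcL rel regL near])
  qed
qed

end
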